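(* Let $1\le m\le n$, let $\Re_I(m,n)=\{Z\in\mathbb C^{m\times n}: I^{(m)}-Z\overline Z'>0\}$, and for an $m\times n$ complex matrix $U$ with $U\overline U'=I^{(m)}$ and $j\in\{1,\dots,mn\}$ define $$P_j(Z,U)=\frac{\det(I-Z\overline Z')^{n/j}}{|\det(I-Z\overline U')|^{2n/j}},\qquad Z\in\Re_I(m,n).$$ Then $L_j\big(P_j(\cdot,U)\big)(Z)=0$ for all $Z\in\Re_I(m,n)$, every such $U$, and every $j=1,\dots,mn$.
   Context: Coordinates on $\Re_I(m,n)$ are the $mn$ entries $z_{11},\dots,z_{1n},\dots,z_{m1},\dots,z_{mn}$ of $Z$ in this order. The Bergman kernel is (up to a constant) $K_I(Z,\overline Z)=\det(I-Z\overline Z')^{-(m+n)}$, and the Bergman metric matrix is $T_I(Z)=\big(\partial^2\log K_I/\partial z_{i\alpha}\partial\overline z_{k\beta}\big)$, which equals $(m+n)$ times the Kronecker product $(I-Z\overline Z')^{-1}\times(I-\overline Z'Z)^{-1}$. For a $C^2$ function $u$ let $L(u)=T_I^{-1}\big(\partial^2u/\partial z_{i\alpha}\partial\overline z_{k\beta}\big)$ (an $mn\times mn$ matrix) and $L_j(u)$ the sum of all principal minors of degree $j$ of $L(u)$. (Multiplying $T_I$ by a positive constant does not affect the vanishing of $L_j(u)$.) *)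

theory Defs
  imports "HOL-Analysis.Analysis"
begin

text \<open>Complex m x n matrices are represented as complex^'n^'m (m rows indexed by 'm,
  n columns indexed by 'n).
  The mn coordinates are indexed by the finite type 'm \<times> 'n.\<close>

definition ctrans :: "complex^'n^'m \<Rightarrow> complex^'m^'n" where
  "ctrans Z = (\<chi> a i. cnj (Z$i$a))"

definition pos_def_herm :: "complex^'m^'m \<Rightarrow> bool" where
  "pos_def_herm A \<longleftrightarrow> (\<forall>i k. A$k$i = cnj (A$i$k)) \<and>
     (\<forall>x::complex^'m. x \<noteq> 0 \<longrightarrow> 0 < Re (\<Sum>i\<in>UNIV. \<Sum>k\<in>UNIV. cnj (x$i) * A$i$k * x$k))"

definition domI :: "(complex^'n^'m) set" where
  "domI = {Z. pos_def_herm (mat 1 - Z ** ctrans Z)}"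

definition dirD :: "complex^'n^'m \<Rightarrow> (complex^'n^'m \<Rightarrow> complex) \<Rightarrow> complex^'n^'m \<Rightarrow> complex" where
  "dirD V f Z = vector_derivative (\<lambda>t::real. f (Z + t *\<^sub>R V)) (at 0)"

definition Emat :: "complex \<Rightarrow> 'm \<Rightarrow> 'n \<Rightarrow> complex^'n^'m" where
  "Emat c i a = (\<chi> k b. if k = i \<and> b = a then c else 0)"

definition dz :: "'m \<Rightarrow> 'n \<Rightarrow> (complex^'n^'m \<Rightarrow> complex) \<Rightarrow> complex^'n^'m \<Rightarrow> complex" where
  "dz i a f Z = (dirD (Emat 1 i a) f Z - \<i> * dirD (Emat \<i> i a) f Z) / 2"

definition dzbar :: "'m \<Rightarrow> 'n \<Rightarrow> (complex^'n^'m \<Rightarrow> complex) \<Rightarrow> complex^'n^'m \<Rightarrow> complex" where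
  "dzbar i a f Z = (dirD (Emat 1 i a) f Z + \<i> * dirD (Emat \<i> i a) f Z) / 2"

definition cHess :: "(complex^'n^'m \<Rightarrow> complex) \<Rightarrow> complex^'n^'m \<Rightarrow> complex^('m\<times>'n)^('m\<times>'n)" where
  "cHess f Z = (\<chi> p q. dz (fst p) (snd p) (dzbar (fst q) (snd q) f) Z)"

text \<open>log of the Bergman kernel K_I = det(I - Z Z*)^{-(m+n)}.\<close>
definition logKI :: "complex^'n^'m \<Rightarrow> complex" where
  "logKI Z = of_real (- real (CARD('m) + CARD('n)) * ln (Re (det (mat 1 - Z ** ctrans Z))))"

definition TI :: "complex^'n^'m \<Rightarrow> complex^('m\<times>'n)^('m\<times>'n)" where
  "TI Z = cHess logKI Z"

definition Lop :: "(complex^'n^'m \<Rightarrow> complex) \<Rightarrow> complex^'n^'m \<Rightarrow> complex^('m\<times>'n)^('m\<times>'n)" where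
  "Lop u Z = matrix_inv (TI Z) ** cHess u Z"

definition sum_principal_minors :: "nat \<Rightarrow> 'a::comm_ring_1^'k^'k \<Rightarrow> 'a" where
  "sum_principal_minors j A =
     (\<Sum>S\<in>{S::'k set. card S = j}. \<Sum>p\<in>{p. p permutes S}.
        of_int (sign p) * (\<Prod>i\<in>S. A$i$(p i)))"

definition Lj :: "nat \<Rightarrow> (complex^'n^'m \<Rightarrow> complex) \<Rightarrow> complex^'n^'m \<Rightarrow> complex" where
  "Lj j u Z = sum_principal_minors j (Lop u Z)"

definition Pj :: "nat \<Rightarrow> complex^'n^'m \<Rightarrow> complex^'n^'m \<Rightarrow> real" where
  "Pj j U Z = (Re (det (mat 1 - Z ** ctrans Z))) powr (real CARD('n) / real j) /
              (cmod (det (mat 1 - Z ** ctrans U))) powr (2 * real CARD('n) / real j)"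

end

theory Submission
  imports Defs "HOL-Analysis.Analysis"
begin

lemma dirD_eq:
  assumes "(f has_derivative f') (at W)"
  shows "dirD V f W = f' V"
proof -
  have l: "linear f'" using assms has_derivative_linear by blast
  have "((\<lambda>t::real. W + t *\<^sub>R V) has_derivative (\<lambda>t. t *\<^sub>R V)) (at 0)"
    by (auto intro!: derivative_eq_intros)
  from has_derivative_compose[OF this, of f f'] assms
  have "((\<lambda>t. f (W + t *\<^sub>R V)) has_derivative (\<lambda>t. f' (t *\<^sub>R V))) (at 0)" by simp
  also have "(\<lambda>t. f' (t *\<^sub>R V)) = (\<lambda>t. t *\<^sub>R f' V)" using l by (simp add: linear_scale)
  finally have "((\<lambda>t. f (W + t *\<^sub>R V)) has_vector_derivative f' V) (at 0)"
    by (simp add: has_vector_derivative_def)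
  then show ?thesis unfolding dirD_def by (rule vector_derivative_at)
qed

definition dzL :: "'m \<Rightarrow> 'n \<Rightarrow> (complex^'n^'m \<Rightarrow> complex) \<Rightarrow> complex" where
  "dzL i a f' = (f' (Emat 1 i a) - \<i> * f' (Emat \<i> i a)) / 2"
definition dzbarL :: "'m \<Rightarrow> 'n \<Rightarrow> (complex^'n^'m \<Rightarrow> complex) \<Rightarrow> complex" where
  "dzbarL i a f' = (f' (Emat 1 i a) + \<i> * f' (Emat \<i> i a)) / 2"

lemma dz_eq: "(f has_derivative f') (at W) \<Longrightarrow> dz i a f W = dzL i a f'"
  by (simp add: dz_def dzL_def dirD_eq)
lemma dzbar_eq: "(f has_derivative f') (at W) \<Longrightarrow> dzbar i a f W = dzbarL i a f'"
  by (simp add: dzbar_def dzbarL_def dirD_eq)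

definition mder :: "(complex^'n^'m \<Rightarrow> complex^'b^'a) \<Rightarrow> (complex^'n^'m \<Rightarrow> complex^'b^'a) \<Rightarrow> complex^'n^'m \<Rightarrow> bool" where
  "mder G G' Z \<longleftrightarrow> (\<forall>i j. ((\<lambda>W. G W $ i $ j) has_derivative (\<lambda>V. G' V $ i $ j)) (at Z))"

lemma mder_const: "mder (\<lambda>W. C) (\<lambda>V. 0) Z"
  by (simp add: mder_def)

lemma mder_id: "mder (\<lambda>W. W) (\<lambda>V. V) (Z::complex^'n^'m)"
  unfolding mder_def
proof (intro allI)
  fix i j
  have "bounded_linear (\<lambda>V::complex^'n^'m. V $ i $ j)"
    using bounded_linear_compose[OF bounded_linear_vec_nth bounded_linear_vec_nth] by blast
  then show "((\<lambda>W::complex^'n^'m. W $ i $ j) has_derivative (\<lambda>V. V $ i $ j)) (at Z)"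
    by (rule bounded_linear_imp_has_derivative)
qed

lemma mder_add: "mder G G' Z \<Longrightarrow> mder H H' Z \<Longrightarrow> mder (\<lambda>W. G W + H W) (\<lambda>V. G' V + H' V) Z"
  unfolding mder_def by (auto intro!: derivative_eq_intros)

lemma mder_diff: "mder G G' Z \<Longrightarrow> mder H H' Z \<Longrightarrow> mder (\<lambda>W. G W - H W) (\<lambda>V. G' V - H' V) Z"
  unfolding mder_def by (auto intro!: derivative_eq_intros)

lemma mder_uminus: "mder G G' Z \<Longrightarrow> mder (\<lambda>W. - G W) (\<lambda>V. - G' V) Z"
  unfolding mder_def by (auto intro!: derivative_eq_intros)

lemma mder_ctrans: "mder G G' Z \<Longrightarrow> mder (\<lambda>W. ctrans (G W)) (\<lambda>V. ctrans (G' V)) Z"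
  unfolding mder_def ctrans_def
  by (auto intro!: bounded_linear.has_derivative[OF bounded_linear_cnj])

lemma mder_mult:
  assumes "mder G G' Z" "mder H H' Z"
  shows "mder (\<lambda>W. G W ** H W) (\<lambda>V. G' V ** H Z + G Z ** H' V) Z"
  unfolding mder_def
proof (intro allI)
  fix i j
  have "((\<lambda>W. \<Sum>r\<in>UNIV. G W $ i $ r * H W $ r $ j) has_derivative
        (\<lambda>V. \<Sum>r\<in>UNIV. G Z $ i $ r * H' V $ r $ j + G' V $ i $ r * H Z $ r $ j)) (at Z)"
    using assms unfolding mder_def by (intro has_derivative_sum has_derivative_mult) auto
  then show "((\<lambda>W. (G W ** H W) $ i $ j) has_derivative (\<lambda>V. (G' V ** H Z + G Z ** H' V) $ i $ j)) (at Z)"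
    by (simp add: matrix_matrix_mult_def sum.distrib add.commute)
qed

lemma mm_neg_r: "(A::'a::ring_1^'n^'m) ** (- B) = - (A ** (B::'a^'p^'n))"
  by (simp add: matrix_matrix_mult_def vec_eq_iff sum_negf)
lemma mm_neg_l: "(- A::'a::ring_1^'n^'m) ** B = - (A ** (B::'a^'p^'n))"
  by (simp add: matrix_matrix_mult_def vec_eq_iff sum_negf)
lemma mm_diff_r: "(A::'a::ring_1^'n^'m) ** (B - C) = A ** B - A ** (C::'a^'p^'n)"
  by (simp add: matrix_matrix_mult_def vec_eq_iff sum_subtractf right_diff_distrib)
lemma mm_diff_l: "((A::'a::ring_1^'n^'m) - B) ** C = A ** C - B ** (C::'a^'p^'n)"
  by (simp add: matrix_matrix_mult_def vec_eq_iff sum_subtractf left_diff_distrib)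
lemma mm_add_l: "((A::'a::semiring_1^'n^'m) + B) ** C = A ** C + B ** (C::'a^'p^'n)"
  by (simp add: matrix_matrix_mult_def vec_eq_iff sum.distrib distrib_right)
lemma mm_add_r: "(A::'a::semiring_1^'n^'m) ** (B + C) = A ** B + A ** (C::'a^'p^'n)"
  by (rule matrix_add_ldistrib)

definition rowrep :: "'a^'k^'k \<Rightarrow> 'k \<Rightarrow> 'a^'k \<Rightarrow> 'a^'k^'k" where
  "rowrep M r x = (\<chi> k. if k = r then x else M $ k)"

definition JD :: "'a::comm_ring_1^'k^'k \<Rightarrow> 'a^'k^'k \<Rightarrow> 'a" where
  "JD M N = (\<Sum>r\<in>UNIV. det (rowrep M r (N $ r)))"

lemma mder_det:
  fixes G :: "complex^'n^'m \<Rightarrow> complex^'k^'k"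
  assumes "mder G G' Z"
  shows "((\<lambda>W. det (G W)) has_derivative (\<lambda>V. JD (G Z) (G' V))) (at Z)"
proof -
  have e: "\<And>i j. ((\<lambda>W. G W $ i $ j) has_derivative (\<lambda>V. G' V $ i $ j)) (at Z)"
    using assms unfolding mder_def by blast
  have "((\<lambda>W. \<Sum>p\<in>{p. p permutes (UNIV::'k set)}. of_int (sign p) * (\<Prod>i\<in>UNIV. G W $ i $ p i))
     has_derivative (\<lambda>V. \<Sum>p\<in>{p. p permutes (UNIV::'k set)}. of_int (sign p) *
        (\<Sum>i\<in>UNIV. G' V $ i $ p i * (\<Prod>j\<in>UNIV - {i}. G Z $ j $ p j)))) (at Z)"
    by (intro has_derivative_sum has_derivative_mult_right has_derivative_prod e)
  moreover have "(\<lambda>V. \<Sum>p\<in>{p. p permutes (UNIV::'k set)}. of_int (sign p) *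
        (\<Sum>i\<in>UNIV. G' V $ i $ p i * (\<Prod>j\<in>UNIV - {i}. G Z $ j $ p j))) = (\<lambda>V. JD (G Z) (G' V))"
  proof
    fix V
    have "JD (G Z) (G' V) = (\<Sum>r\<in>UNIV. \<Sum>p\<in>{p. p permutes (UNIV::'k set)}. of_int (sign p) *
        ((\<Prod>j\<in>UNIV - {r}. G Z $ j $ p j) * G' V $ r $ p r))"
      unfolding JD_def det_def
    proof (intro sum.cong refl)
      fix r p
      have "(\<Prod>i\<in>UNIV. rowrep (G Z) r (G' V $ r) $ i $ p i) =
            rowrep (G Z) r (G' V $ r) $ r $ p r * (\<Prod>i\<in>UNIV-{r}. rowrep (G Z) r (G' V $ r) $ i $ p i)"
        by (simp add: prod.remove)
      also have "\<dots> = G' V $ r $ p r * (\<Prod>j\<in>UNIV - {r}. G Z $ j $ p j)"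
        by (simp add: rowrep_def)
      finally show "of_int (sign p) * (\<Prod>i\<in>UNIV. rowrep (G Z) r (G' V $ r) $ i $ p i) =
         of_int (sign p) * ((\<Prod>j\<in>UNIV - {r}. G Z $ j $ p j) * G' V $ r $ p r)"
        by (simp add: mult.commute)
    qed
    also have "\<dots> = (\<Sum>p\<in>{p. p permutes (UNIV::'k set)}. of_int (sign p) *
        (\<Sum>i\<in>UNIV. G' V $ i $ p i * (\<Prod>j\<in>UNIV - {i}. G Z $ j $ p j)))"
      by (subst sum.swap) (simp add: sum_distrib_left mult.commute)
    finally show "(\<Sum>p\<in>{p. p permutes (UNIV::'k set)}. of_int (sign p) *
        (\<Sum>i\<in>UNIV. G' V $ i $ p i * (\<Prod>j\<in>UNIV - {i}. G Z $ j $ p j))) = JD (G Z) (G' V)" by simp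
  qed
  ultimately show ?thesis unfolding det_def by simp
qed

definition cof :: "'a::comm_ring_1^'k^'k \<Rightarrow> 'k \<Rightarrow> 'k \<Rightarrow> 'a" where
  "cof M r c = det (rowrep M r (axis c 1))"

lemma det_rowrep_expand:
  fixes M :: "'a::comm_ring_1^'k^'k"
  shows "det (rowrep M r x) = (\<Sum>c\<in>UNIV. x $ c * cof M r c)"
proof -
  have x: "x = (\<Sum>c\<in>UNIV. x $ c *s axis c 1)"
    by (simp add: vec_eq_iff axis_def sum_component if_distrib[of "\<lambda>t. _ * t"] cong: if_cong)
  have "det (rowrep M r x) = det (\<chi> k. if k = r then (\<Sum>c\<in>UNIV. x $ c *s axis c 1) else M $ k)"
    unfolding rowrep_def by (subst x) simp
  also have "\<dots> = (\<Sum>c\<in>UNIV. det (\<chi> k. if k = r then x $ c *s axis c 1 else M $ k))"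
    by (rule det_linear_row_sum) simp
  also have "\<dots> = (\<Sum>c\<in>UNIV. x $ c * cof M r c)"
    unfolding cof_def rowrep_def by (simp add: det_row_mul)
  finally show ?thesis .
qed

lemma det_rowrep_same: "det (rowrep M r (M $ i)) = (if i = r then det M else 0)"
proof (cases "i = r")
  case True
  then have "rowrep M r (M $ i) = M" by (simp add: rowrep_def vec_eq_iff)
  then show ?thesis using True by simp
next
  case False
  have "row i (rowrep M r (M $ i)) = row r (rowrep M r (M $ i))"
    using False by (simp add: rowrep_def row_def vec_eq_iff)
  then show ?thesis using det_identical_rows[OF False] False by simp
qed

lemma invertible_inv:
  fixes A :: "'a::semiring_1^'k^'k"
  assumes "invertible A"
  shows "A ** matrix_inv A = mat 1" "matrix_inv A ** A = mat 1"
  using someI_ex[OF assms[unfolded invertible_def]] unfolding matrix_inv_def by auto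

lemma matrix_inv_unique:
  fixes A :: "'a::comm_semiring_1^'k^'k"
  assumes "A ** B = mat 1" "B ** A = mat 1"
  shows "matrix_inv A = B"
proof -
  have inv: "invertible A" using assms invertible_def by blast
  have "matrix_inv A = matrix_inv A ** (A ** B)" using assms by simp
  also have "\<dots> = B" using invertible_inv(2)[OF inv] by (simp add: matrix_mul_assoc)
  finally show ?thesis .
qed

lemma cof_inv:
  fixes M :: "'a::field^'k^'k"
  assumes "det M \<noteq> 0"
  shows "cof M r c = det M * matrix_inv M $ c $ r"
proof -
  have inv: "invertible M" using assms invertible_det_nz by blast
  define Adj where "Adj = (\<chi> c r. cof M r c)"
  have "M ** Adj = mat (det M)"
    unfolding matrix_matrix_mult_def Adj_def
    by (simp add: vec_eq_iff mat_def det_rowrep_expand[symmetric] det_rowrep_same)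
  then have "matrix_inv M ** (M ** Adj) = matrix_inv M ** mat (det M)" by simp
  then have "Adj = matrix_inv M ** mat (det M)"
    by (simp add: matrix_mul_assoc invertible_inv(2)[OF inv])
  then have "Adj $ c $ r = det M * matrix_inv M $ c $ r"
    by (simp add: matrix_matrix_mult_def mat_def if_distrib mult.commute cong: if_cong)
  then show ?thesis by (simp add: Adj_def)
qed

lemma JD_trace:
  fixes M :: "'a::field^'k^'k"
  assumes "det M \<noteq> 0"
  shows "JD M N = det M * trace (matrix_inv M ** N)"
  unfolding JD_def det_rowrep_expand cof_inv[OF assms] trace_def matrix_matrix_mult_def
  by (subst sum.swap) (simp add: sum_distrib_left mult_ac)

lemma mder_rowrep_const:
  assumes "mder G G' Z"
  shows "mder (\<lambda>W. rowrep (G W) r x) (\<lambda>V. rowrep (G' V) r 0) Z"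
  unfolding mder_def rowrep_def
proof (intro allI)
  fix i j show "((\<lambda>W. (\<chi> k. if k = r then x else G W $ k) $ i $ j) has_derivative (\<lambda>V. (\<chi> k. if k = r then 0 else G' V $ k) $ i $ j)) (at Z)"
    using assms unfolding mder_def by (cases "i = r") auto
qed


lemma mder_inv:
  fixes G :: "complex^'n^'m \<Rightarrow> complex^'k^'k"
  assumes G: "mder G G' Z" and nz: "det (G Z) \<noteq> 0"
  shows "mder (\<lambda>W. matrix_inv (G W)) (\<lambda>V. - (matrix_inv (G Z) ** G' V ** matrix_inv (G Z))) Z"
proof -
  let ?A = "matrix_inv (G Z)"
  have dd: "((\<lambda>W. det (G W)) has_derivative (\<lambda>V. JD (G Z) (G' V))) (at Z)"
    by (rule mder_det[OF G])
  obtain e where e: "e > 0" "\<And>W. dist Z W < e \<Longrightarrow> det (G W) \<noteq> 0"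
    using continuous_at_avoid[OF has_derivative_continuous[OF dd] nz] by blast
  have ent: "\<exists>d. ((\<lambda>W. matrix_inv (G W) $ c $ r) has_derivative d) (at Z)" for c r
  proof -
    have cd: "((\<lambda>W. cof (G W) r c) has_derivative (\<lambda>V. JD (rowrep (G Z) r (axis c 1)) (rowrep (G' V) r 0))) (at Z)"
      unfolding cof_def by (rule mder_det[OF mder_rowrep_const[OF G]])
    note hd = has_derivative_divide'[OF cd dd nz]
    show ?thesis
    proof (intro exI, rule has_derivative_transform_within[OF hd e(1)])
      fix W assume "W \<in> UNIV" "dist W Z < e"
      then have "det (G W) \<noteq> 0" using e(2) by (simp add: dist_commute)
      then show "cof (G W) r c / det (G W) = matrix_inv (G W) $ c $ r"
        by (simp add: cof_inv)
    qed auto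
  qed
  obtain d where d: "\<And>c r. ((\<lambda>W. matrix_inv (G W) $ c $ r) has_derivative d c r) (at Z)"
    using ent by metis
  define Ai' where "Ai' = (\<lambda>V. (\<chi> c r. d c r V) :: complex^'k^'k)"
  have mA: "mder (\<lambda>W. matrix_inv (G W)) Ai' Z"
    unfolding mder_def Ai'_def using d by simp
  have prod: "mder (\<lambda>W. G W ** matrix_inv (G W)) (\<lambda>V. G' V ** ?A + G Z ** Ai' V) Z"
    by (rule mder_mult[OF G mA])
  have zero: "G' V ** ?A + G Z ** Ai' V = 0" for V
  proof -
    have "(G' V ** ?A + G Z ** Ai' V) $ i $ k = 0" for i k
    proof -
      have h1: "((\<lambda>W. (G W ** matrix_inv (G W)) $ i $ k) has_derivative (\<lambda>V. (G' V ** ?A + G Z ** Ai' V) $ i $ k)) (at Z)"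
        using prod unfolding mder_def by blast
      have "((\<lambda>W. (mat 1 :: complex^'k^'k) $ i $ k) has_derivative (\<lambda>V. 0)) (at Z)" by simp
      then have h2: "((\<lambda>W. (G W ** matrix_inv (G W)) $ i $ k) has_derivative (\<lambda>V. 0)) (at Z)"
      proof (rule has_derivative_transform_within[OF _ e(1)])
        fix W assume "W \<in> UNIV" "dist W Z < e"
        then have "det (G W) \<noteq> 0" using e(2) by (simp add: dist_commute)
        then have "invertible (G W)" using invertible_det_nz by blast
        then show "(mat 1 :: complex^'k^'k) $ i $ k = (G W ** matrix_inv (G W)) $ i $ k"
          by (simp add: invertible_inv)
      qed auto
      from has_derivative_unique[OF h1 h2] show ?thesis by meson
    qed
    then show ?thesis by (simp add: vec_eq_iff)
  qed
  have invZ: "invertible (G Z)" using nz invertible_det_nz by blast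
  have "Ai' V = - (?A ** G' V ** ?A)" for V
  proof -
    have "Ai' V = ?A ** (G Z ** Ai' V)"
      by (simp add: matrix_mul_assoc invertible_inv(2)[OF invZ])
    also have "G Z ** Ai' V = - (G' V ** ?A)" using zero[of V] by (simp add: add_eq_0_iff)
    finally show ?thesis by (simp add: matrix_mul_assoc mm_neg_r mm_neg_l)
  qed
  then have "Ai' = (\<lambda>V. - (?A ** G' V ** ?A))" by auto
  then show ?thesis using mA by simp
qed

lemma mder_cong: "mder G G' Z \<Longrightarrow> (\<And>V. G' V = G'' V) \<Longrightarrow> mder G G'' Z"
  by (metis ext)

lemma wirt:
  assumes "\<And>c. f' (Emat c k b) = c * t1 + cnj c * t2"
  shows "dzL k b f' = t1" "dzbarL k b f' = t2"
proof -
  show "dzL k b f' = t1" unfolding dzL_def assms by (simp add: field_simps)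
  show "dzbarL k b f' = t2" unfolding dzbarL_def assms by (simp add: field_simps)
qed

lemma ctrans_Emat: "ctrans (Emat c i a) = Emat (cnj c) a i"
  by (auto simp: ctrans_def Emat_def vec_eq_iff)

lemma Emat_mult_left: "(Emat c i a ** Y) $ r $ s = (if r = i then c * Y $ a $ s else 0)"
  by (simp add: Emat_def matrix_matrix_mult_def if_distrib[of "\<lambda>t. t * _"] cong: if_cong)

lemma Emat_mult_right: "(X ** Emat c i a) $ r $ s = (if s = a then X $ r $ i * c else 0)"
  by (simp add: Emat_def matrix_matrix_mult_def if_distrib[of "\<lambda>t. _ * t"] cong: if_cong)

lemma Emat_mid: "(X ** (Emat c i a ** Y)) $ r $ s = X $ r $ i * c * Y $ a $ s"
proof -
  have "(X ** (Emat c i a ** Y)) $ r $ s = (\<Sum>k\<in>UNIV. X $ r $ k * (Emat c i a ** Y) $ k $ s)"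
    unfolding matrix_matrix_mult_def[of X] by simp
  also have "\<dots> = X $ r $ i * c * Y $ a $ s"
    unfolding Emat_mult_left by (simp add: if_distrib[of "\<lambda>t. _ * t"] mult_ac cong: if_cong)
  finally show ?thesis .
qed

lemma Emat_mid2: "(X ** Emat c i a ** Y) $ r $ s = X $ r $ i * c * Y $ a $ s"
  by (simp add: Emat_mid flip: matrix_mul_assoc)

lemma trace_Emat_l: "trace (A ** (Emat c i a ** X)) = c * (X ** A) $ a $ i"
  unfolding trace_def Emat_mid
  by (simp add: matrix_matrix_mult_def sum_distrib_left mult_ac)

lemma trace_Emat_r: "trace (A ** (X ** Emat c i a)) = c * (A ** X) $ a $ i"
  unfolding trace_def matrix_mul_assoc Emat_mult_right
  by (simp add: mult_ac)

definition MI :: "complex^'n^'m \<Rightarrow> complex^'m^'m" where "MI W = mat 1 - W ** ctrans W"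
definition MI' :: "complex^'n^'m \<Rightarrow> complex^'n^'m \<Rightarrow> complex^'m^'m" where
  "MI' W V = - (V ** ctrans W + W ** ctrans V)"
definition FI :: "complex^'n^'m \<Rightarrow> complex^'n^'m \<Rightarrow> complex^'m^'m" where "FI U W = mat 1 - W ** ctrans U"
definition FI' :: "complex^'n^'m \<Rightarrow> complex^'n^'m \<Rightarrow> complex^'m^'m" where "FI' U V = - (V ** ctrans U)"

lemma mder_MI: "mder MI (MI' W) W"
proof -
  have "mder (\<lambda>X. mat 1 - X ** ctrans X) (\<lambda>V. 0 - (V ** ctrans W + W ** ctrans V)) W"
    by (intro mder_diff mder_const mder_mult mder_id mder_ctrans)
  then show ?thesis unfolding MI_def MI'_def by (rule mder_cong) simp
qed

lemma mder_FI: "mder (FI U) (FI' U) W"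
proof -
  have "mder (\<lambda>X. mat 1 - X ** ctrans U) (\<lambda>V. 0 - (V ** ctrans U + W ** 0)) W"
    by (intro mder_diff mder_const mder_mult mder_id)
  then show ?thesis unfolding FI_def[abs_def] FI'_def by (rule mder_cong) simp
qed

lemma hd_det_inv:
  assumes "mder G G' W" "det (G W) \<noteq> (0::complex)"
  shows "((\<lambda>X. det (G X)) has_derivative (\<lambda>V. det (G W) * trace (matrix_inv (G W) ** G' V))) (at W)"
  using mder_det[OF assms(1)] JD_trace[OF assms(2)] by simp

lemma cont_det_MI: "continuous_on UNIV (\<lambda>X. det (MI X))"
  by (rule has_derivative_continuous_on[OF has_derivative_at_withinI[OF mder_det[OF mder_MI]]])

lemma cont_det_FI: "continuous_on UNIV (\<lambda>X. det (FI U X))"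
  by (rule has_derivative_continuous_on[OF has_derivative_at_withinI[OF mder_det[OF mder_FI]]])

lemma trace_neg: "trace (- A :: 'a::comm_ring_1^'k^'k) = - trace A"
  by (simp add: trace_def sum_negf)

lemma trace_MI':
  "trace (A ** MI' W (Emat c k b)) = - (c * (ctrans W ** A) $ b $ k + cnj c * (A ** W) $ k $ b)"
  unfolding MI'_def ctrans_Emat mm_neg_r matrix_add_ldistrib trace_neg trace_add trace_Emat_l trace_Emat_r
  by simp

lemma trace_FI':
  "trace (H ** FI' U (Emat c k b)) = - (c * (ctrans U ** H) $ b $ k)"
  unfolding FI'_def mm_neg_r trace_neg trace_Emat_l by simp

lemma ctrans_ctrans[simp]: "ctrans (ctrans A) = A"
  by (simp add: ctrans_def vec_eq_iff)
lemma ctrans_mult: "ctrans (A ** B) = ctrans B ** ctrans A"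
  by (simp add: ctrans_def matrix_matrix_mult_def vec_eq_iff mult.commute)
lemma ctrans_diff: "ctrans (A - B) = ctrans A - ctrans B"
  by (simp add: ctrans_def vec_eq_iff)
lemma ctrans_add: "ctrans (A + B) = ctrans A + ctrans B"
  by (simp add: ctrans_def vec_eq_iff)
lemma ctrans_neg: "ctrans (- A) = - ctrans A"
  by (simp add: ctrans_def vec_eq_iff)
lemma ctrans_mat1[simp]: "ctrans (mat 1 :: complex^'k^'k) = mat 1"
  by (simp add: ctrans_def vec_eq_iff mat_def)

lemma det_ctrans: "det (ctrans (M::complex^'k^'k)) = cnj (det M)"
proof -
  have "ctrans M = transpose (\<chi> i j. cnj (M $ i $ j))"
    by (simp add: ctrans_def transpose_def)
  then have "det (ctrans M) = det (\<chi> i j. cnj (M $ i $ j))" by simp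
  also have "\<dots> = cnj (det M)" by (simp add: det_def)
  finally show ?thesis .
qed

lemma MI_herm: "ctrans (MI W) = MI W"
  by (simp add: MI_def ctrans_diff ctrans_mult)

lemma det_MI_real: "cnj (det (MI W)) = det (MI W)"
  using det_ctrans[of "MI W"] MI_herm[of W] by simp

lemma det_MI_ofreal: "det (MI W) = complex_of_real (Re (det (MI W)))"
  using det_MI_real[of W] by (metis Reals_cnj_iff complex_is_Real_iff of_real_Re)

definition Om :: "complex^'n^'m \<Rightarrow> (complex^'n^'m) set" where
  "Om U = {W. 0 < Re (det (MI W)) \<and> det (FI U W) \<noteq> 0}"

lemma open_Om: "open (Om U)"
proof -
  have c: "continuous_on UNIV (\<lambda>X. Re (det (MI X)))"
    using cont_det_MI by (intro continuous_intros)
  have o1: "open {W. 0 < Re (det (MI W))}"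
    using open_Collect_less[OF continuous_on_const c, of 0] by simp
  have o2: "open {W. det (FI U W) \<noteq> 0}"
    by (intro open_Collect_neq cont_det_FI continuous_intros)
  have "Om U = {W. 0 < Re (det (MI W))} \<inter> {W. det (FI U W) \<noteq> 0}"
    by (auto simp: Om_def)
  then show ?thesis using o1 o2 by auto
qed

definition AI :: "complex^'n^'m \<Rightarrow> complex^'m^'m" where "AI W = matrix_inv (MI W)"
definition HI :: "complex^'n^'m \<Rightarrow> complex^'n^'m \<Rightarrow> complex^'m^'m" where "HI U W = matrix_inv (FI U W)"

definition Phi :: "complex^'n^'m \<Rightarrow> complex^'n^'m \<Rightarrow> complex" where
  "Phi U W = Ln (det (MI W)) - Ln (det (FI U W) * cnj (det (FI U W)))"
definition Phi' :: "complex^'n^'m \<Rightarrow> complex^'n^'m \<Rightarrow> complex^'n^'m \<Rightarrow> complex" where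
  "Phi' U W V = trace (AI W ** MI' W V) - (trace (HI U W ** FI' U V) + cnj (trace (HI U W ** FI' U V)))"
definition P0 :: "real \<Rightarrow> complex^'n^'m \<Rightarrow> complex^'n^'m \<Rightarrow> complex" where
  "P0 s U W = exp (of_real s * Phi U W)"

definition Ya :: "complex^'n^'m \<Rightarrow> complex^'n^'m \<Rightarrow> complex^'m^'n" where
  "Ya U W = ctrans U ** HI U W - ctrans W ** AI W"
definition Yb :: "complex^'n^'m \<Rightarrow> complex^'n^'m \<Rightarrow> complex^'n^'m" where
  "Yb U W = ctrans (HI U W) ** U - AI W ** W"

lemma hd_Ln:
  assumes "(f has_derivative f') (at W)" "f W \<notin> \<real>\<^sub>\<le>\<^sub>0"
  shows "((\<lambda>x. Ln (f x)) has_derivative (\<lambda>v. f' v / f W)) (at W)"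
proof -
  have "((\<lambda>x. Ln (f x)) has_derivative (\<lambda>v. inverse (f W) * f' v)) (at W)"
    using has_derivative_compose[OF assms(1) has_field_derivative_imp_has_derivative[OF has_field_derivative_Ln[OF assms(2)]]] .
  then show ?thesis by (simp add: field_simps)
qed

lemma hd_cnj: "(f has_derivative f') F \<Longrightarrow> ((\<lambda>x. cnj (f x)) has_derivative (\<lambda>v. cnj (f' v))) F"
  by (rule bounded_linear.has_derivative[OF bounded_linear_cnj])

lemma Om_facts:
  assumes "W \<in> Om U"
  shows "det (MI W) \<notin> \<real>\<^sub>\<le>\<^sub>0" "det (FI U W) * cnj (det (FI U W)) \<notin> \<real>\<^sub>\<le>\<^sub>0"
    "det (MI W) \<noteq> 0" "det (FI U W) \<noteq> 0"
proof -
  have p: "0 < Re (det (MI W))" and e: "det (FI U W) \<noteq> 0" using assms by (auto simp: Om_def)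
  show "det (MI W) \<notin> \<real>\<^sub>\<le>\<^sub>0"
    using p by (subst det_MI_ofreal) (auto simp: nonpos_Reals_def)
  define q where "q = (cmod (det (FI U W)))\<^sup>2"
  have "det (FI U W) * cnj (det (FI U W)) = of_real q"
    unfolding q_def by (rule complex_norm_square[symmetric])
  moreover have "0 < q" using e by (simp add: q_def)
  ultimately show "det (FI U W) * cnj (det (FI U W)) \<notin> \<real>\<^sub>\<le>\<^sub>0"
    by (simp add: complex_nonpos_Reals_iff)
  show "det (MI W) \<noteq> 0" using p by auto
  show "det (FI U W) \<noteq> 0" by fact
qed

lemma hd_Phi:
  assumes W: "W \<in> Om U"
  shows "(Phi U has_derivative Phi' U W) (at W)"
proof -
  note f = Om_facts[OF W]
  let ?D = "det (MI W)" and ?E = "det (FI U W)"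
  let ?tD = "\<lambda>V. trace (AI W ** MI' W V)" and ?tE = "\<lambda>V. trace (HI U W ** FI' U V)"
  have dD: "((\<lambda>X. det (MI X)) has_derivative (\<lambda>V. ?D * ?tD V)) (at W)"
    unfolding AI_def by (rule hd_det_inv[OF mder_MI f(3)])
  have dE: "((\<lambda>X. det (FI U X)) has_derivative (\<lambda>V. ?E * ?tE V)) (at W)"
    unfolding HI_def by (rule hd_det_inv[OF mder_FI f(4)])
  have dEE: "((\<lambda>X. det (FI U X) * cnj (det (FI U X))) has_derivative
      (\<lambda>V. ?E * cnj (?E * ?tE V) + ?E * ?tE V * cnj ?E)) (at W)"
    by (rule has_derivative_mult[OF dE hd_cnj[OF dE]])
  have "(Phi U has_derivative (\<lambda>V. ?D * ?tD V / ?D -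
        (?E * cnj (?E * ?tE V) + ?E * ?tE V * cnj ?E) / (?E * cnj ?E))) (at W)"
    unfolding Phi_def[abs_def]
    by (rule has_derivative_diff[OF hd_Ln[OF dD f(1)] hd_Ln[OF dEE f(2)]])
  moreover have "(\<lambda>V. ?D * ?tD V / ?D -
        (?E * cnj (?E * ?tE V) + ?E * ?tE V * cnj ?E) / (?E * cnj ?E)) = Phi' U W"
  proof
    fix V
    have "cnj ?E \<noteq> 0" using f(4) by simp
    then show "?D * ?tD V / ?D -
        (?E * cnj (?E * ?tE V) + ?E * ?tE V * cnj ?E) / (?E * cnj ?E) = Phi' U W V"
      unfolding Phi'_def using f(3,4) by (simp add: field_simps)
  qed
  ultimately show ?thesis by simp
qed

lemma hd_P0:
  assumes W: "W \<in> Om U"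
  shows "(P0 s U has_derivative (\<lambda>V. P0 s U W * (of_real s * Phi' U W V))) (at W)"
proof -
  have "((\<lambda>X. of_real s * Phi U X) has_derivative (\<lambda>V. of_real s * Phi' U W V)) (at W)"
    by (rule has_derivative_mult_right[OF hd_Phi[OF W]])
  from has_derivative_compose[OF this has_field_derivative_imp_has_derivative[OF DERIV_exp]]
  show ?thesis unfolding P0_def[abs_def] by simp
qed

lemma Phi'_Emat:
  assumes W: "W \<in> Om U"
  shows "Phi' U W (Emat c k b) = c * Ya U W $ b $ k + cnj c * Yb U W $ k $ b"
proof -
  have "cnj ((ctrans U ** HI U W) $ b $ k) = (ctrans (HI U W) ** U) $ k $ b"
    using ctrans_mult[of "ctrans U" "HI U W"] by (simp add: ctrans_def vec_eq_iff)
  then show ?thesis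
    unfolding Phi'_def trace_MI' trace_FI' Ya_def Yb_def
    by (simp add: algebra_simps)
qed

lemma Pj_eq:
  fixes U W :: "complex^'n^'m"
  assumes W: "W \<in> Om U"
  shows "complex_of_real (Pj j U W) = P0 (real CARD('n) / real j) U W"
proof -
  note f = Om_facts[OF W]
  let ?s = "real CARD('n) / real j"
  let ?r = "Re (det (MI W))" and ?e = "cmod (det (FI U W))"
  have r: "0 < ?r" using W by (simp add: Om_def)
  have e: "0 < ?e" using f(4) by simp
  have l1: "Ln (det (MI W)) = of_real (ln ?r)"
    by (subst det_MI_ofreal) (simp add: Ln_of_real r)
  define q where "q = ?e\<^sup>2"
  have q: "0 < q" using e by (simp add: q_def)
  have "det (FI U W) * cnj (det (FI U W)) = of_real q"
    unfolding q_def by (rule complex_norm_square[symmetric])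
  then have "Ln (det (FI U W) * cnj (det (FI U W))) = of_real (ln q)"
    using q by (simp add: Ln_of_real)
  also have "ln q = 2 * ln ?e" unfolding q_def using e by (simp add: ln_realpow)
  finally have l2: "Ln (det (FI U W) * cnj (det (FI U W))) = of_real (2 * ln ?e)" .
  have "Pj j U W = ?r powr ?s / ?e powr (2 * ?s)"
    by (simp add: Pj_def MI_def FI_def)
  also have "\<dots> = exp (?s * ln ?r) / exp (2 * ?s * ln ?e)"
    unfolding powr_def using r e by (simp add: mult_ac)
  also have "\<dots> = exp (?s * (ln ?r - 2 * ln ?e))"
    by (simp add: exp_diff[symmetric] algebra_simps)
  finally show ?thesis
    unfolding P0_def Phi_def l1 l2 by (simp add: exp_of_real[symmetric] algebra_simps)
qed

definition Bm :: "complex^'n^'m \<Rightarrow> complex^'n^'n" where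
  "Bm W = mat 1 + ctrans W ** (AI W ** W)"

lemma mder_AI:
  assumes "det (MI Z) \<noteq> 0"
  shows "mder AI (\<lambda>V. - (AI Z ** MI' Z V ** AI Z)) Z"
  unfolding AI_def[abs_def] by (rule mder_inv[OF mder_MI assms])

lemma mder_HI:
  assumes "det (FI U Z) \<noteq> 0"
  shows "mder (HI U) (\<lambda>V. - (HI U Z ** FI' U V ** HI U Z)) Z"
  unfolding HI_def[abs_def] by (rule mder_inv[OF mder_FI assms])

lemma hd_entry: "mder G G' Z \<Longrightarrow> ((\<lambda>W. G W $ k $ b) has_derivative (\<lambda>V. G' V $ k $ b)) (at Z)"
  unfolding mder_def by blast

lemma AIW_Emat:
  "((- (AI Z ** MI' Z (Emat c i a) ** AI Z)) ** Z + AI Z ** Emat c i a) $ k $ b =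
     c * (AI Z $ k $ i * Bm Z $ a $ b) + cnj c * ((AI Z ** Z) $ k $ a * (AI Z ** Z) $ i $ b)"
proof -
  have e: "(- (AI Z ** MI' Z (Emat c i a) ** AI Z)) ** Z =
      AI Z ** (Emat c i a ** (ctrans Z ** (AI Z ** Z))) + (AI Z ** Z) ** (Emat (cnj c) a i ** (AI Z ** Z))"
    unfolding MI'_def ctrans_Emat mm_neg_r mm_neg_l mm_add_l mm_add_r
    by (simp add: matrix_mul_assoc)
  show ?thesis
    unfolding mm_add_l vector_add_component e Emat_mid Emat_mult_right Bm_def
    by (simp add: mat_def algebra_simps)
qed

lemma HIU_Emat:
  "(ctrans (- (HI U Z ** FI' U (Emat c i a) ** HI U Z)) ** U) $ k $ b =
     cnj c * ((ctrans (HI U Z) ** U) $ k $ a * (ctrans (HI U Z) ** U) $ i $ b)"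
proof -
  have e: "ctrans (- (HI U Z ** FI' U (Emat c i a) ** HI U Z)) ** U =
      (ctrans (HI U Z) ** U) ** (Emat (cnj c) a i ** (ctrans (HI U Z) ** U))"
    unfolding FI'_def mm_neg_r mm_neg_l ctrans_neg ctrans_mult ctrans_Emat ctrans_ctrans
    by (simp add: matrix_mul_assoc)
  show ?thesis unfolding e Emat_mid by (simp add: algebra_simps)
qed

lemma aux_lin: "(P::complex) * (s * (c * x + cnj c * y)) = c * (P * s * x) + cnj c * (P * s * y)"
  by (simp add: algebra_simps)

lemma hd_Pc:
  fixes U W :: "complex^'n^'m"
  assumes W: "W \<in> Om U"
  shows "((\<lambda>X. complex_of_real (Pj j U X)) has_derivative
     (\<lambda>V. P0 (real CARD('n) / real j) U W * (of_real (real CARD('n) / real j) * Phi' U W V))) (at W)"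
  by (rule has_derivative_transform_within_open[OF hd_P0[OF W] open_Om W]) (simp add: Pj_eq)

lemma dzbar_Pc:
  fixes U W :: "complex^'n^'m"
  assumes W: "W \<in> Om U"
  shows "dzbar k b (\<lambda>X. complex_of_real (Pj j U X)) W =
     of_real (real CARD('n) / real j) * P0 (real CARD('n) / real j) U W * Yb U W $ k $ b"
proof -
  define s where "s = (of_real (real CARD('n) / real j) :: complex)"
  define P where "P = P0 (real CARD('n) / real j) U W"
  have "dzbarL k b (\<lambda>V. P * (s * Phi' U W V)) = P * s * Yb U W $ k $ b"
    by (rule wirt(2)[of _ _ _ "P * s * Ya U W $ b $ k"]) (simp only: Phi'_Emat[OF W] aux_lin)
  then show ?thesis unfolding s_def P_def
    by (subst dzbar_eq[OF hd_Pc[OF W]]) (simp add: mult_ac)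
qed

lemma Ln_det_MI:
  assumes W: "W \<in> Om U"
  shows "Ln (det (MI W)) = of_real (ln (Re (det (MI W))))"
proof -
  have r: "0 < Re (det (MI W))" using W by (simp add: Om_def)
  show ?thesis by (subst det_MI_ofreal) (simp add: Ln_of_real r)
qed

lemma logKI_eq:
  fixes W :: "complex^'n^'m"
  assumes W: "W \<in> Om U"
  shows "logKI W = - of_real (real (CARD('m) + CARD('n))) * Ln (det (MI W))"
  unfolding logKI_def MI_def[symmetric] Ln_det_MI[OF W] by simp

lemma hd_logKI:
  fixes W :: "complex^'n^'m"
  assumes W: "W \<in> Om U"
  shows "(logKI has_derivative (\<lambda>V. - of_real (real (CARD('m) + CARD('n))) * trace (AI W ** MI' W V))) (at W)"
proof -
  note f = Om_facts[OF W]
  have dD: "((\<lambda>X. det (MI X)) has_derivative (\<lambda>V. det (MI W) * trace (AI W ** MI' W V))) (at W)"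
    unfolding AI_def by (rule hd_det_inv[OF mder_MI f(3)])
  have "((\<lambda>X. - of_real (real (CARD('m) + CARD('n))) * Ln (det (MI X))) has_derivative
     (\<lambda>V. - of_real (real (CARD('m) + CARD('n))) * (det (MI W) * trace (AI W ** MI' W V) / det (MI W)))) (at W)"
    by (rule has_derivative_mult_right[OF hd_Ln[OF dD f(1)]])
  then have "((\<lambda>X. - of_real (real (CARD('m) + CARD('n))) * Ln (det (MI X))) has_derivative
     (\<lambda>V. - of_real (real (CARD('m) + CARD('n))) * trace (AI W ** MI' W V))) (at W)"
    using f(3) by simp
  then show ?thesis
    by (rule has_derivative_transform_within_open[OF _ open_Om[of U] W]) (simp add: logKI_eq)
qed

lemma dzbar_logKI:
  fixes W :: "complex^'n^'m"
  assumes W: "W \<in> Om U"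
  shows "dzbar k b logKI W = of_real (real (CARD('m) + CARD('n))) * (AI W ** W) $ k $ b"
proof -
  define c0 where "c0 = (of_real (real (CARD('m) + CARD('n))) :: complex)"
  have "dzbarL k b (\<lambda>V. - c0 * trace (AI W ** MI' W V)) = c0 * (AI W ** W) $ k $ b"
    by (rule wirt(2)[of _ _ _ "c0 * (ctrans W ** AI W) $ b $ k"]) (simp add: trace_MI' algebra_simps)
  then show ?thesis unfolding c0_def by (subst dzbar_eq[OF hd_logKI[OF W]])
qed

lemma TI_entry:
  fixes Z :: "complex^'n^'m"
  assumes Z: "Z \<in> Om U"
  shows "TI Z $ (i,a) $ (k,b) = of_real (real (CARD('m) + CARD('n))) * (AI Z $ k $ i * Bm Z $ a $ b)"
proof -
  define c0 where "c0 = (of_real (real (CARD('m) + CARD('n))) :: complex)"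
  note f = Om_facts[OF Z]
  have h1: "((\<lambda>W. (AI W ** W) $ k $ b) has_derivative
      (\<lambda>V. ((- (AI Z ** MI' Z V ** AI Z)) ** Z + AI Z ** V) $ k $ b)) (at Z)"
    by (rule hd_entry[OF mder_mult[OF mder_AI[OF f(3)] mder_id]])
  have h2: "((\<lambda>W. c0 * (AI W ** W) $ k $ b) has_derivative
      (\<lambda>V. c0 * ((- (AI Z ** MI' Z V ** AI Z)) ** Z + AI Z ** V) $ k $ b)) (at Z)"
    by (rule has_derivative_mult_right[OF h1])
  have h3: "((dzbar k b logKI) has_derivative
      (\<lambda>V. c0 * ((- (AI Z ** MI' Z V ** AI Z)) ** Z + AI Z ** V) $ k $ b)) (at Z)"
    by (rule has_derivative_transform_within_open[OF h2 open_Om Z]) (simp add: dzbar_logKI c0_def)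
  have "dz i a (dzbar k b logKI) Z = c0 * (AI Z $ k $ i * Bm Z $ a $ b)"
    unfolding dz_eq[OF h3]
    by (rule wirt(1)[of _ _ _ _ "c0 * ((AI Z ** Z) $ k $ a * (AI Z ** Z) $ i $ b)"])
       (simp only: AIW_Emat distrib_left mult_ac)
  then show ?thesis unfolding TI_def cHess_def c0_def by simp
qed

lemma mder_Yb:
  assumes "det (MI Z) \<noteq> 0" "det (FI U Z) \<noteq> 0"
  shows "mder (Yb U) (\<lambda>V. (ctrans (- (HI U Z ** FI' U V ** HI U Z)) ** U + ctrans (HI U Z) ** 0) -
      ((- (AI Z ** MI' Z V ** AI Z)) ** Z + AI Z ** V)) Z"
  unfolding Yb_def[abs_def]
  by (rule mder_diff[OF mder_mult[OF mder_ctrans[OF mder_HI[OF assms(2)]] mder_const] mder_mult[OF mder_AI[OF assms(1)] mder_id]])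

lemma cHessP_entry:
  fixes U Z :: "complex^'n^'m"
  assumes Z: "Z \<in> Om U"
  shows "cHess (\<lambda>X. complex_of_real (Pj j U X)) Z $ (i,a) $ (k,b) =
    of_real (real CARD('n) / real j) * P0 (real CARD('n) / real j) U Z *
     (of_real (real CARD('n) / real j) * Ya U Z $ a $ i * Yb U Z $ k $ b - AI Z $ k $ i * Bm Z $ a $ b)"
proof -
  define s where "s = (of_real (real CARD('n) / real j) :: complex)"
  define P where "P = P0 (real CARD('n) / real j) U Z"
  note f = Om_facts[OF Z]
  define Yb' where "Yb' = (\<lambda>V. (ctrans (- (HI U Z ** FI' U V ** HI U Z)) ** U + ctrans (HI U Z) ** 0) -
      ((- (AI Z ** MI' Z V ** AI Z)) ** Z + AI Z ** V))"
  have hY: "((\<lambda>W. Yb U W $ k $ b) has_derivative (\<lambda>V. Yb' V $ k $ b)) (at Z)"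
    unfolding Yb'_def by (rule hd_entry[OF mder_Yb[OF f(3,4)]])
  have hP: "((\<lambda>W. s * P0 (real CARD('n) / real j) U W) has_derivative (\<lambda>V. s * (P * (s * Phi' U Z V)))) (at Z)"
    unfolding s_def P_def by (rule has_derivative_mult_right[OF hd_P0[OF Z]])
  have h2: "((\<lambda>W. s * P0 (real CARD('n) / real j) U W * Yb U W $ k $ b) has_derivative
      (\<lambda>V. s * P * Yb' V $ k $ b + s * (P * (s * Phi' U Z V)) * Yb U Z $ k $ b)) (at Z)"
    using has_derivative_mult[OF hP hY] by (simp add: P_def)
  have h3: "((dzbar k b (\<lambda>X. complex_of_real (Pj j U X))) has_derivative
      (\<lambda>V. s * P * Yb' V $ k $ b + s * (P * (s * Phi' U Z V)) * Yb U Z $ k $ b)) (at Z)"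
    by (rule has_derivative_transform_within_open[OF h2 open_Om Z]) (simp add: dzbar_Pc s_def)
  have YE: "Yb' (Emat c i a) $ k $ b = cnj c * ((ctrans (HI U Z) ** U) $ k $ a * (ctrans (HI U Z) ** U) $ i $ b)
     - (c * (AI Z $ k $ i * Bm Z $ a $ b) + cnj c * ((AI Z ** Z) $ k $ a * (AI Z ** Z) $ i $ b))" for c
    unfolding Yb'_def vector_minus_component times0_right add_0_right HIU_Emat AIW_Emat ..
  have "dz i a (dzbar k b (\<lambda>X. complex_of_real (Pj j U X))) Z =
      s * P * (s * Ya U Z $ a $ i * Yb U Z $ k $ b - AI Z $ k $ i * Bm Z $ a $ b)"
    unfolding dz_eq[OF h3]
    by (rule wirt(1)[of _ _ _ _ "s * P * ((ctrans (HI U Z) ** U) $ k $ a * (ctrans (HI U Z) ** U) $ i $ b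
         - (AI Z ** Z) $ k $ a * (AI Z ** Z) $ i $ b) + s * (P * (s * Yb U Z $ i $ a)) * Yb U Z $ k $ b"])
       (simp only: YE Phi'_Emat[OF Z], simp add: algebra_simps)
  then show ?thesis unfolding cHess_def s_def P_def by simp
qed

lemma det_rows_rank1_lemma:
  fixes a :: "'k::finite \<Rightarrow> 'a::comm_ring_1^'k" and y :: "'a^'k"
  assumes "r \<notin> R"
  shows "det (\<chi> p. if p = r then y else if p \<in> R then a p + x p *s y else a p) =
         det (\<chi> p. if p = r then y else a p)"
  using assms
proof (induction R rule: infinite_finite_induct)
  case (infinite R)
  then show ?case by simp
next
  case empty
  then show ?case by (simp cong: if_cong)
next
  case (insert q R)
  have qr: "q \<noteq> r" using insert by auto
  let ?b = "\<lambda>p. if p = r then y else if p \<in> R then a p + x p *s y else a p"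
  have e1: "(\<chi> p. if p = r then y else if p \<in> insert q R then a p + x p *s y else a p) =
      (\<chi> p. if p = q then a q + x q *s y else ?b p)"
    using qr insert by (auto simp: vec_eq_iff)
  have e2: "(\<chi> p. if p = q then a q else ?b p) = (\<chi> p. if p = r then y else if p \<in> R then a p + x p *s y else a p)"
    using qr insert by (auto simp: vec_eq_iff)
  have z: "det (\<chi> p. if p = q then x q *s y else ?b p) = 0"
  proof -
    have "det (\<chi> p. if p = q then x q *s y else ?b p) = x q * det (\<chi> p. if p = q then y else ?b p)"
      by (rule det_row_mul)
    moreover have "det (\<chi> p. if p = q then y else ?b p) = 0"
      by (rule det_identical_rows[OF qr]) (simp add: row_def vec_eq_iff qr)
    ultimately show ?thesis by simp
  qed
  show ?case unfolding e1 det_row_add[of q "\<lambda>p. a q" "\<lambda>p. x q *s y" ?b, simplified] e2 z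
    using insert by simp
qed

definition diagv :: "('k \<Rightarrow> 'a::zero) \<Rightarrow> 'k \<Rightarrow> 'a^'k" where
  "diagv d p = (\<chi> q. if q = p then d p else 0)"

lemma det_row_y_diag:
  fixes d :: "'k::finite \<Rightarrow> 'a::comm_ring_1"
  shows "det (\<chi> p. if p = r then y else diagv d p) = y $ r * (\<Prod>p\<in>UNIV - {r}. d p)"
proof -
  have M: "(\<chi> p. if p = r then y else diagv d p) = rowrep (\<chi> p. diagv d p) r y"
    by (simp add: rowrep_def vec_eq_iff)
  have cof: "cof (\<chi> p. diagv d p) r c = (if c = r then (\<Prod>p\<in>UNIV - {r}. d p) else 0)" for c
  proof (cases "c = r")
    case True
    have "cof (\<chi> p. diagv d p) r c = (\<Prod>i\<in>UNIV. (if i = r then 1 else d i))"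
      unfolding cof_def rowrep_def True
      by (subst det_diagonal) (auto simp: diagv_def axis_def intro!: prod.cong)
    also have "\<dots> = (\<Prod>p\<in>UNIV - {r}. d p)"
      by (subst prod.remove[of _ r]) auto
    finally show ?thesis using True by simp
  next
    case False
    have "cof (\<chi> p. diagv d p) r c = det (\<chi> p. if p = c then d c *s axis c 1 else rowrep (\<chi> p. diagv d p) r (axis c 1) $ p)"
      unfolding cof_def using False
      by (intro arg_cong[where f=det]) (auto simp: vec_eq_iff rowrep_def diagv_def axis_def)
    also have "\<dots> = d c * det (\<chi> p. if p = c then axis c 1 else rowrep (\<chi> p. diagv d p) r (axis c 1) $ p)"
      by (rule det_row_mul)
    also have "det (\<chi> p. if p = c then axis c 1 else rowrep (\<chi> p. diagv d p) r (axis c 1) $ p) = 0"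
      by (rule det_identical_rows[OF False]) (simp add: row_def rowrep_def vec_eq_iff)
    finally show ?thesis using False by simp
  qed
  show ?thesis unfolding M det_rowrep_expand cof
    by (simp add: if_distrib[of "\<lambda>t. _ * t"] cong: if_cong)
qed

lemma det_diag_rank1:
  fixes d x :: "'k::finite \<Rightarrow> 'a::comm_ring_1" and y :: "'a^'k"
  shows "det (\<chi> p q. (if p = q then d p else 0) + x p * y $ q) =
     (\<Prod>p\<in>UNIV. d p) + (\<Sum>r\<in>UNIV. x r * y $ r * (\<Prod>p\<in>UNIV - {r}. d p))"
proof -
  have Q: "det (\<chi> p. if p \<in> R then diagv d p + x p *s y else diagv d p) =
     (\<Prod>p\<in>UNIV. d p) + (\<Sum>r\<in>R. x r * y $ r * (\<Prod>p\<in>UNIV - {r}. d p))" for R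
  proof (induction R rule: infinite_finite_induct)
    case (infinite R)
    then show ?case by simp
  next
    case empty
    have "det (\<chi> p. diagv d p) = (\<Prod>p\<in>UNIV. d p)"
      by (subst det_diagonal) (auto simp: diagv_def)
    then show ?case by simp
  next
    case (insert r R)
    let ?b = "\<lambda>p. if p \<in> R then diagv d p + x p *s y else diagv d p"
    have e1: "(\<chi> p. if p \<in> insert r R then diagv d p + x p *s y else diagv d p) =
        (\<chi> p. if p = r then diagv d r + x r *s y else ?b p)"
      by (auto simp: vec_eq_iff)
    have e2: "(\<chi> p. if p = r then diagv d r else ?b p) = (\<chi> p. ?b p)"
      using insert by (auto simp: vec_eq_iff)
    have e3: "det (\<chi> p. if p = r then x r *s y else ?b p) = x r * (y $ r * (\<Prod>p\<in>UNIV - {r}. d p))"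
    proof -
      have "det (\<chi> p. if p = r then x r *s y else ?b p) = x r * det (\<chi> p. if p = r then y else ?b p)"
        by (rule det_row_mul)
      also have "det (\<chi> p. if p = r then y else ?b p) = det (\<chi> p. if p = r then y else diagv d p)"
        by (rule det_rows_rank1_lemma) (use insert in auto)
      finally show ?thesis by (simp add: det_row_y_diag)
    qed
    show ?case unfolding e1 det_row_add[of r "\<lambda>p. diagv d r" "\<lambda>p. x r *s y" ?b, simplified] e2 e3
      using insert by (simp add: mult_ac)
  qed
  have "(\<chi> p q. (if p = q then d p else 0) + x p * y $ q) =
      (\<chi> p. if p \<in> UNIV then diagv d p + x p *s y else diagv d p)"
    by (auto simp: vec_eq_iff diagv_def)
  then show ?thesis using Q[of UNIV] by simp
qed

lemma pminor_det:
  fixes X :: "'a::comm_ring_1^'k::finite^'k"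
  shows "(\<Sum>p\<in>{p. p permutes S}. of_int (sign p) * (\<Prod>i\<in>S. X $ i $ p i)) =
    det (\<chi> p q. if p \<in> S \<and> q \<in> S then X $ p $ q else (if p = q then 1 else 0))"
  unfolding det_def
proof (rule sum.mono_neutral_cong_left)
  show "finite {p. p permutes (UNIV::'k set)}" by simp
  show "{p. p permutes S} \<subseteq> {p. p permutes UNIV}"
    by (auto intro: permutes_subset)
  show "\<forall>p\<in>{p. p permutes UNIV} - {p. p permutes S}.
     of_int (sign p) * (\<Prod>i\<in>UNIV. (\<chi> p q. if p \<in> S \<and> q \<in> S then X $ p $ q else (if p = q then 1 else 0)) $ i $ p i) = 0"
  proof
    fix p assume p: "p \<in> {p. p permutes UNIV} - {p. p permutes S}"
    then have pU: "p permutes UNIV" and nS: "\<not> p permutes S" by auto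
    have "\<exists>i. i \<notin> S \<and> p i \<noteq> i"
    proof (rule ccontr)
      assume "\<not> (\<exists>i. i \<notin> S \<and> p i \<noteq> i)"
      then have "\<forall>i. i \<notin> S \<longrightarrow> p i = i" by blast
      then have "p permutes S" using pU unfolding permutes_def by blast
      then show False using nS by blast
    qed
    then obtain i where i: "i \<notin> S" "p i \<noteq> i" by blast
    have "(\<chi> p q. if p \<in> S \<and> q \<in> S then X $ p $ q else (if p = q then 1 else 0)) $ i $ p i = 0"
      using i by auto
    then show "of_int (sign p) * (\<Prod>i\<in>UNIV. (\<chi> p q. if p \<in> S \<and> q \<in> S then X $ p $ q else (if p = q then 1 else 0)) $ i $ p i) = 0"
      by (metis (no_types, lifting) finite_class.finite_UNIV iso_tuple_UNIV_I mult_zero_right prod_zero)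
  qed
  fix p assume "p \<in> {p. p permutes S}"
  then have p: "p permutes S" by simp
  have "(\<Prod>i\<in>UNIV. (\<chi> p q. if p \<in> S \<and> q \<in> S then X $ p $ q else (if p = q then 1 else 0)) $ i $ p i)
      = (\<Prod>i\<in>S. X $ i $ p i)"
  proof (rule sym, rule prod.mono_neutral_cong_left)
    show "\<forall>i\<in>UNIV - S. (\<chi> p q. if p \<in> S \<and> q \<in> S then X $ p $ q else (if p = q then 1 else 0)) $ i $ p i = 1"
      using permutes_not_in[OF p] by auto
    fix i assume "i \<in> S"
    then show "X $ i $ p i = (\<chi> p q. if p \<in> S \<and> q \<in> S then X $ p $ q else (if p = q then 1 else 0)) $ i $ p i"
      using permutes_in_image[OF p, of i] by auto
  qed auto
  then show "of_int (sign p) * (\<Prod>i\<in>S. X $ i $ p i) =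
    of_int (sign p) * (\<Prod>i\<in>UNIV. (\<chi> p q. if p \<in> S \<and> q \<in> S then X $ p $ q else (if p = q then 1 else 0)) $ i $ p i)"
    by simp
qed

lemma pminor_rank1:
  fixes v w :: "'k::finite \<Rightarrow> 'a::comm_ring_1"
  assumes "S \<noteq> {}"
  shows "(\<Sum>p\<in>{p. p permutes S}. of_int (sign p) * (\<Prod>i\<in>S. (\<chi> p q. (if p = q then k0 else 0) + v p * w q) $ i $ p i)) =
    k0 ^ card S + k0 ^ (card S - 1) * (\<Sum>r\<in>S. v r * w r)"
proof -
  define d where "d = (\<lambda>p. if p \<in> S then k0 else 1)"
  define x where "x = (\<lambda>p. if p \<in> S then v p else 0)"
  define y where "y = (\<chi> q. if q \<in> S then w q else 0)"
  have M: "(\<chi> p q. if p \<in> S \<and> q \<in> S then (\<chi> p q. (if p = q then k0 else 0) + v p * w q) $ p $ q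
             else (if p = q then 1 else 0)) = (\<chi> p q. (if p = q then d p else 0) + x p * y $ q)"
    by (auto simp: vec_eq_iff d_def x_def y_def)
  have pd: "(\<Prod>p\<in>UNIV. d p) = k0 ^ card S"
    unfolding d_def by (simp add: prod.If_cases Int_def)
  have pd2: "(\<Prod>p\<in>UNIV - {r}. d p) = k0 ^ (card S - 1)" if "r \<in> S" for r
  proof -
    have "(\<Prod>p\<in>UNIV - {r}. d p) = k0 ^ card ((UNIV - {r}) \<inter> S)"
      unfolding d_def by (simp add: prod.If_cases Int_def)
    also have "(UNIV - {r}) \<inter> S = S - {r}" by auto
    finally show ?thesis using that by simp
  qed
  have "(\<Sum>r\<in>UNIV. x r * y $ r * (\<Prod>p\<in>UNIV - {r}. d p)) = (\<Sum>r\<in>S. v r * w r * k0 ^ (card S - 1))"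
    by (rule sum.mono_neutral_cong_right) (auto simp: x_def y_def pd2)
  then show ?thesis
    unfolding pminor_det M det_diag_rank1 pd by (simp add: sum_distrib_left mult_ac)
qed

lemma card_sets_card:
  "card {S::'k::finite set. card S = j} = CARD('k) choose j"
  using n_subsets[of "UNIV::'k set" j] by simp

lemma card_sets_card_mem:
  assumes "1 \<le> j"
  shows "card {S::'k::finite set. card S = j \<and> r \<in> S} = (CARD('k) - 1) choose (j - 1)"
proof -
  have "{S::'k set. card S = j \<and> r \<in> S} = insert r ` {T. T \<subseteq> UNIV - {r} \<and> card T = j - 1}"
  proof
    show "{S::'k set. card S = j \<and> r \<in> S} \<subseteq> insert r ` {T. T \<subseteq> UNIV - {r} \<and> card T = j - 1}"
    proof
      fix S :: "'k set" assume "S \<in> {S. card S = j \<and> r \<in> S}"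
      then have S: "card S = j" "r \<in> S" by auto
      then have "S = insert r (S - {r})" "S - {r} \<in> {T. T \<subseteq> UNIV - {r} \<and> card T = j - 1}" by auto
      then show "S \<in> insert r ` {T. T \<subseteq> UNIV - {r} \<and> card T = j - 1}" by blast
    qed
    show "insert r ` {T. T \<subseteq> UNIV - {r} \<and> card T = j - 1} \<subseteq> {S::'k set. card S = j \<and> r \<in> S}"
      using assms by (auto simp: card_insert_if subset_eq)
  qed
  moreover have "inj_on (insert r) {T. T \<subseteq> UNIV - {r} \<and> card T = j - 1}"
    by (rule inj_onI) blast
  ultimately have "card {S::'k set. card S = j \<and> r \<in> S} = card {T. T \<subseteq> UNIV - {r} \<and> card T = j - 1}"
    by (simp add: card_image)
  also have "\<dots> = card (UNIV - {r::'k}) choose (j - 1)" by (rule n_subsets) simp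
  finally show ?thesis by simp
qed

lemma spm_rank1:
  fixes v w :: "'k::finite \<Rightarrow> 'a::comm_ring_1"
  assumes "1 \<le> j"
  shows "sum_principal_minors j (\<chi> p q. (if p = q then k0 else 0) + v p * w q) =
    of_nat (CARD('k) choose j) * k0 ^ j + of_nat ((CARD('k) - 1) choose (j - 1)) * k0 ^ (j - 1) * (\<Sum>r\<in>UNIV. v r * w r)"
proof -
  have "sum_principal_minors j (\<chi> p q. (if p = q then k0 else 0) + v p * w q) =
     (\<Sum>S\<in>{S::'k set. card S = j}. k0 ^ j + k0 ^ (j - 1) * (\<Sum>r\<in>S. v r * w r))"
    unfolding sum_principal_minors_def
  proof (rule sum.cong[OF refl])
    fix S :: "'k set" assume "S \<in> {S. card S = j}"
    then have "card S = j" "S \<noteq> {}" using assms by auto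
    then show "(\<Sum>p\<in>{p. p permutes S}. of_int (sign p) * (\<Prod>i\<in>S. (\<chi> p q. (if p = q then k0 else 0) + v p * w q) $ i $ p i)) =
       k0 ^ j + k0 ^ (j - 1) * (\<Sum>r\<in>S. v r * w r)"
      using pminor_rank1[of S k0 v w] by simp
  qed
  also have "\<dots> = of_nat (card {S::'k set. card S = j}) * k0 ^ j +
       k0 ^ (j - 1) * (\<Sum>S\<in>{S::'k set. card S = j}. \<Sum>r\<in>UNIV. if r \<in> S then v r * w r else 0)"
    by (simp add: sum.distrib sum_distrib_left sum.If_cases Int_def)
  also have "(\<Sum>S\<in>{S::'k set. card S = j}. \<Sum>r\<in>UNIV. if r \<in> S then v r * w r else 0) =
      (\<Sum>r\<in>UNIV. of_nat (card {S::'k set. card S = j \<and> r \<in> S}) * (v r * w r))"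
    by (subst sum.swap) (simp add: sum.If_cases Int_def conj_commute)
  also have "\<dots> = of_nat ((CARD('k) - 1) choose (j - 1)) * (\<Sum>r\<in>UNIV. v r * w r)"
    by (simp add: card_sets_card_mem[OF assms] sum_distrib_left)
  finally show ?thesis by (simp add: card_sets_card mult_ac)
qed

lemma key_identity:
  fixes U Z :: "complex^'n^'m" and A H :: "complex^'m^'m"
  assumes UU: "U ** ctrans U = mat 1"
    and AM: "A ** (mat 1 - Z ** ctrans Z) = mat 1"
    and FH: "(mat 1 - Z ** ctrans U) ** H = mat 1"
  shows "(ctrans H ** U - A ** Z) ** (mat 1 - ctrans Z ** Z) ** (ctrans U ** H - ctrans Z ** A) **
         (mat 1 - Z ** ctrans Z) = mat 1"
proof -
  let ?M = "mat 1 - Z ** ctrans Z" and ?N = "mat 1 - ctrans Z ** Z" and ?G = "mat 1 - U ** ctrans Z"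
  have HG: "ctrans H ** ?G = mat 1"
    using arg_cong[OF FH, of ctrans] by (simp add: ctrans_mult ctrans_diff)
  have AZN: "A ** Z ** ?N = Z"
  proof -
    have "A ** Z ** ?N = A ** (Z - Z ** ctrans Z ** Z)"
      by (simp add: matrix_mul_assoc mm_diff_r)
    also have "Z - Z ** ctrans Z ** Z = ?M ** Z" by (simp add: mm_diff_l)
    also have "A ** (?M ** Z) = Z" by (simp add: matrix_mul_assoc AM)
    finally show ?thesis .
  qed
  have HUZZ: "ctrans H ** U ** ctrans Z ** Z = ctrans H ** Z - Z"
  proof -
    have "ctrans H ** (?G ** Z) = Z" by (simp add: matrix_mul_assoc HG)
    moreover have "ctrans H ** (?G ** Z) = ctrans H ** Z - ctrans H ** U ** ctrans Z ** Z"
      by (simp add: mm_diff_l mm_diff_r matrix_mul_assoc)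
    ultimately show ?thesis by (simp add: algebra_simps)
  qed
  have s2: "(ctrans H ** U - A ** Z) ** ?N = ctrans H ** (U - Z)"
  proof -
    have "(ctrans H ** U - A ** Z) ** ?N = ctrans H ** U - ctrans H ** U ** ctrans Z ** Z - A ** Z ** ?N"
      by (simp add: mm_diff_l mm_diff_r matrix_mul_assoc)
    also have "\<dots> = ctrans H ** U - ctrans H ** Z"
      unfolding HUZZ AZN by (simp add: algebra_simps)
    also have "\<dots> = ctrans H ** (U - Z)" by (simp add: mm_diff_r)
    finally show ?thesis .
  qed
  have ZUH: "Z ** ctrans U ** H = H - mat 1"
    using FH by (simp add: mm_diff_l algebra_simps)
  have AMr: "ctrans Z ** A ** ?M = ctrans Z"
    by (simp add: AM flip: matrix_mul_assoc)
  have s3: "(U - Z) ** (ctrans U ** H - ctrans Z ** A) ** ?M = ?G"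
  proof -
    have "(U - Z) ** (ctrans U ** H - ctrans Z ** A) ** ?M = (U - Z) ** (ctrans U ** H ** ?M - ctrans Z)"
      by (simp add: mm_diff_l AM flip: matrix_mul_assoc)
    also have "\<dots> = U ** (ctrans U ** H ** ?M) - U ** ctrans Z - (Z ** (ctrans U ** H ** ?M) - Z ** ctrans Z)"
      by (simp only: mm_diff_l[of U Z] mm_diff_r[of U "ctrans U ** H ** ?M" "ctrans Z"] mm_diff_r[of Z "ctrans U ** H ** ?M" "ctrans Z"])
    also have "\<dots> = (U ** ctrans U) ** H ** ?M - U ** ctrans Z - (Z ** ctrans U ** H) ** ?M + Z ** ctrans Z"
      by (simp add: matrix_mul_assoc)
    also have "\<dots> = H ** ?M - U ** ctrans Z - (H - mat 1) ** ?M + Z ** ctrans Z"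
      unfolding UU ZUH by simp
    also have "\<dots> = ?G"
      by (simp add: mm_diff_l algebra_simps)
    finally show ?thesis .
  qed
  have "(ctrans H ** U - A ** Z) ** ?N ** (ctrans U ** H - ctrans Z ** A) ** ?M =
      ctrans H ** ((U - Z) ** (ctrans U ** H - ctrans Z ** A) ** ?M)"
    unfolding s2 by (simp add: matrix_mul_assoc)
  also have "\<dots> = mat 1" unfolding s3 HG ..
  finally show ?thesis .
qed

lemma sum_pairs: "(\<Sum>q\<in>(UNIV::('a::finite \<times> 'b::finite) set). f q) = (\<Sum>k\<in>UNIV. \<Sum>b\<in>UNIV. f (k, b))"
  by (simp add: sum.cartesian_product UNIV_Times_UNIV[symmetric] del: UNIV_Times_UNIV)

lemma AM_facts:
  assumes "det (MI Z) \<noteq> 0"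
  shows "AI Z ** MI Z = mat 1" "MI Z ** AI Z = mat 1"
  using invertible_inv[of "MI Z"] assms invertible_det_nz unfolding AI_def by auto

lemma HF_facts:
  assumes "det (FI U Z) \<noteq> 0"
  shows "HI U Z ** FI U Z = mat 1" "FI U Z ** HI U Z = mat 1"
  using invertible_inv[of "FI U Z"] assms invertible_det_nz unfolding HI_def by auto

lemma BN_facts:
  fixes Z :: "complex^'n^'m"
  assumes "det (MI Z) \<noteq> 0"
  shows "Bm Z ** (mat 1 - ctrans Z ** Z) = mat 1" "(mat 1 - ctrans Z ** Z) ** Bm Z = mat 1"
proof -
  note f = AM_facts[OF assms]
  let ?A = "AI Z"
  have "Bm Z ** (mat 1 - ctrans Z ** Z) = mat 1 - ctrans Z ** Z + ctrans Z ** (?A ** (Z - Z ** ctrans Z ** Z))"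
    unfolding Bm_def by (simp add: mm_add_l mm_diff_r matrix_mul_assoc)
  also have "Z - Z ** ctrans Z ** Z = MI Z ** Z" by (simp add: MI_def mm_diff_l)
  also have "?A ** (MI Z ** Z) = Z" by (simp add: matrix_mul_assoc f)
  finally show "Bm Z ** (mat 1 - ctrans Z ** Z) = mat 1" by simp
  have "(mat 1 - ctrans Z ** Z) ** Bm Z = mat 1 - ctrans Z ** Z + (ctrans Z - ctrans Z ** Z ** ctrans Z) ** (?A ** Z)"
    unfolding Bm_def by (simp add: mm_diff_l mm_add_r matrix_mul_assoc)
  also have "ctrans Z - ctrans Z ** Z ** ctrans Z = ctrans Z ** MI Z" by (simp add: MI_def mm_diff_r matrix_mul_assoc)
  also have "ctrans Z ** MI Z ** (?A ** Z) = ctrans Z ** Z" by (metis f(2) matrix_mul_assoc matrix_mul_lid)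
  finally show "(mat 1 - ctrans Z ** Z) ** Bm Z = mat 1" by simp
qed

definition NI :: "complex^'n^'m \<Rightarrow> complex^'n^'n" where "NI Z = mat 1 - ctrans Z ** Z"
definition c0 :: "complex^'n^'m \<Rightarrow> complex" where "c0 Z = of_real (real (CARD('m) + CARD('n)))"

lemma c0_nz: "c0 (Z::complex^'n^'m) \<noteq> 0"
proof -
  have "(0::real) < real (CARD('m) + CARD('n))" using zero_less_card_finite[where 'a='m] by linarith
  then show ?thesis unfolding c0_def by (metis of_real_eq_0_iff less_irrefl)
qed

definition Tinv :: "complex^'n^'m \<Rightarrow> complex^('m\<times>'n)^('m\<times>'n)" where
  "Tinv Z = (\<chi> q p. MI Z $ fst p $ fst q * NI Z $ snd q $ snd p / c0 Z)"

lemma TI_entry':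
  fixes Z :: "complex^'n^'m"
  assumes Z: "Z \<in> Om U"
  shows "TI Z $ p $ q = c0 Z * (AI Z $ fst q $ fst p * Bm Z $ snd p $ snd q)"
  using TI_entry[OF Z, of "fst p" "snd p" "fst q" "snd q"] by (simp add: c0_def)

lemma mm_entry_pairs: "((X::complex^('a::finite\<times>'b::finite)^'c) ** (Y::complex^'d^('a\<times>'b))) $ p $ p' = (\<Sum>k\<in>UNIV. \<Sum>b\<in>UNIV. X $ p $ (k,b) * Y $ (k,b) $ p')"
  unfolding matrix_matrix_mult_def by (simp add: sum_pairs)

lemma TI_inv:
  fixes Z :: "complex^'n^'m"
  assumes Z: "Z \<in> Om U"
  shows "TI Z ** Tinv Z = mat 1" "Tinv Z ** TI Z = mat 1"
proof -
  note f = Om_facts[OF Z]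
  note am = AM_facts[OF f(3)] and bn = BN_facts[OF f(3), folded NI_def]
  note c0 = c0_nz[of Z]
  show "TI Z ** Tinv Z = mat 1"
  proof -
    have "(TI Z ** Tinv Z) $ p $ p' = (MI Z ** AI Z) $ fst p' $ fst p * (Bm Z ** NI Z) $ snd p $ snd p'" for p p'
    proof -
      have "(TI Z ** Tinv Z) $ p $ p' = (\<Sum>k\<in>UNIV. \<Sum>b\<in>UNIV. c0 Z * (AI Z $ k $ fst p * Bm Z $ snd p $ b) *
          (MI Z $ fst p' $ k * NI Z $ b $ snd p' / c0 Z))"
        unfolding mm_entry_pairs TI_entry'[OF Z] Tinv_def by simp
      also have "\<dots> = (\<Sum>k\<in>UNIV. MI Z $ fst p' $ k * AI Z $ k $ fst p) * (\<Sum>b\<in>UNIV. Bm Z $ snd p $ b * NI Z $ b $ snd p')"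
        using c0 by (simp add: sum_product mult_ac)
      finally show ?thesis by (simp add: matrix_matrix_mult_def)
    qed
    then show ?thesis unfolding am bn by (auto simp: vec_eq_iff mat_def prod_eq_iff)
  qed
  show "Tinv Z ** TI Z = mat 1"
  proof -
    have "(Tinv Z ** TI Z) $ p $ p' = (AI Z ** MI Z) $ fst p' $ fst p * (NI Z ** Bm Z) $ snd p $ snd p'" for p p'
    proof -
      have "(Tinv Z ** TI Z) $ p $ p' = (\<Sum>k\<in>UNIV. \<Sum>b\<in>UNIV. (MI Z $ k $ fst p * NI Z $ snd p $ b / c0 Z) *
          (c0 Z * (AI Z $ fst p' $ k * Bm Z $ b $ snd p')))"
        unfolding mm_entry_pairs TI_entry'[OF Z] Tinv_def by simp
      also have "\<dots> = (\<Sum>k\<in>UNIV. AI Z $ fst p' $ k * MI Z $ k $ fst p) * (\<Sum>b\<in>UNIV. NI Z $ snd p $ b * Bm Z $ b $ snd p')"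
        using c0 by (simp add: sum_product mult_ac)
      finally show ?thesis by (simp add: matrix_matrix_mult_def)
    qed
    then show ?thesis unfolding am bn by (auto simp: vec_eq_iff mat_def prod_eq_iff)
  qed
qed

lemma main_Om:
  fixes U Z :: "complex^'n^'m"
  assumes Z: "Z \<in> Om U" and UU: "U ** ctrans U = mat 1" and j: "1 \<le> j"
  shows "Lj j (\<lambda>W. complex_of_real (Pj j U W)) Z = 0"
proof -
  note f = Om_facts[OF Z]
  note am = AM_facts[OF f(3)] and hf = HF_facts[OF f(4)]
  define s where "s = (of_real (real CARD('n) / real j) :: complex)"
  define P where "P = P0 (real CARD('n) / real j) U Z"
  define c where "c = c0 Z"
  have c: "c \<noteq> 0" unfolding c_def by (rule c0_nz)
  define a where "a = (\<lambda>p::'m\<times>'n. Ya U Z $ snd p $ fst p)"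
  define b where "b = (\<lambda>q::'m\<times>'n. Yb U Z $ fst q $ snd q)"
  let ?Hs = "cHess (\<lambda>W. complex_of_real (Pj j U W)) Z"
  have H: "?Hs $ p $ q = s * P * s * a p * b q - (s * P / c) * TI Z $ p $ q" for p q
  proof -
    have "?Hs $ p $ q = s * P * (s * a p * b q - AI Z $ fst q $ fst p * Bm Z $ snd p $ snd q)"
      using cHessP_entry[OF Z, of j "fst p" "snd p" "fst q" "snd q"] by (simp add: s_def P_def a_def b_def)
    then show ?thesis unfolding TI_entry'[OF Z] c_def[symmetric] using c by (simp add: field_simps)
  qed
  have invT: "matrix_inv (TI Z) = Tinv Z"
    by (rule matrix_inv_unique[OF TI_inv[OF Z]])
  define v where "v = (\<lambda>p. s * P * s * (\<Sum>r\<in>UNIV. Tinv Z $ p $ r * a r))"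
  define k0 where "k0 = - (s * P / c)"
  have L: "Lop (\<lambda>W. complex_of_real (Pj j U W)) Z = (\<chi> p q. (if p = q then k0 else 0) + v p * b q)"
  proof -
    have "(Tinv Z ** ?Hs) $ p $ q = (if p = q then k0 else 0) + v p * b q" for p q
    proof -
      have "(Tinv Z ** ?Hs) $ p $ q = (\<Sum>r\<in>UNIV. Tinv Z $ p $ r * (s * P * s * a r * b q - (s * P / c) * TI Z $ r $ q))"
        unfolding matrix_matrix_mult_def H by simp
      also have "\<dots> = s * P * s * (\<Sum>r\<in>UNIV. Tinv Z $ p $ r * a r) * b q - (s * P / c) * (Tinv Z ** TI Z) $ p $ q"
        by (simp add: matrix_matrix_mult_def sum_subtractf right_diff_distrib sum_distrib_left sum_distrib_right mult_ac)
      also have "\<dots> = (if p = q then k0 else 0) + v p * b q"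
        unfolding TI_inv(2)[OF Z] by (simp add: mat_def v_def k0_def)
      finally show ?thesis .
    qed
    then show ?thesis unfolding Lop_def invT by (simp add: vec_eq_iff)
  qed
  have tr: "(\<Sum>p\<in>UNIV. (\<Sum>r\<in>UNIV. Tinv Z $ p $ r * a r) * b p) = of_nat CARD('m) / c"
  proof -
    have inner: "(\<Sum>i\<in>UNIV. \<Sum>al\<in>UNIV. MI Z $ i $ k * NI Z $ be $ al * Ya U Z $ al $ i / c) * Yb U Z $ k $ be =
        Yb U Z $ k $ be * (NI Z ** (Ya U Z ** MI Z)) $ be $ k / c" for k be
      unfolding matrix_matrix_mult_def
      by (subst sum.swap) (simp add: sum_distrib_left sum_distrib_right sum_divide_distrib mult_ac)
    have "(\<Sum>p\<in>UNIV. (\<Sum>r\<in>UNIV. Tinv Z $ p $ r * a r) * b p) =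
        (\<Sum>k\<in>UNIV. \<Sum>be\<in>UNIV. Yb U Z $ k $ be * (NI Z ** (Ya U Z ** MI Z)) $ be $ k / c)"
      unfolding sum_pairs[of "\<lambda>p. (\<Sum>r\<in>UNIV. Tinv Z $ p $ r * a r) * b p"]
      unfolding sum_pairs Tinv_def a_def b_def c_def[symmetric] by (simp add: inner)
    also have "\<dots> = trace (Yb U Z ** (NI Z ** (Ya U Z ** MI Z))) / c"
      by (simp add: trace_def matrix_matrix_mult_def sum_divide_distrib)
    also have "Yb U Z ** (NI Z ** (Ya U Z ** MI Z)) = mat 1"
    proof -
      have "(ctrans (HI U Z) ** U - AI Z ** Z) ** (mat 1 - ctrans Z ** Z) ** (ctrans U ** HI U Z - ctrans Z ** AI Z) **
         (mat 1 - Z ** ctrans Z) = mat 1"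
        by (rule key_identity[OF UU]) (use am hf in \<open>simp_all add: MI_def FI_def\<close>)
      then show ?thesis by (simp add: Yb_def Ya_def NI_def MI_def matrix_mul_assoc)
    qed
    finally show ?thesis by (simp add: trace_I)
  qed
  have sumvw: "(\<Sum>r\<in>UNIV. v r * b r) = s * P * s * (of_nat CARD('m) / c)"
  proof -
    have "(\<Sum>r\<in>UNIV. v r * b r) = s * P * s * (\<Sum>p\<in>UNIV. (\<Sum>r\<in>UNIV. Tinv Z $ p $ r * a r) * b p)"
      unfolding v_def by (simp add: sum_distrib_left sum_distrib_right mult_ac)
    then show ?thesis using tr by simp
  qed
  have nat: "j * (CARD('m\<times>'n) choose j) = CARD('m\<times>'n) * ((CARD('m\<times>'n) - 1) choose (j - 1))"
    using binomial_absorption[of "j - 1" "CARD('m\<times>'n)"] j by simp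
  have cn: "CARD('m\<times>'n) = CARD('m) * CARD('n)" by (simp add: card_cartesian_product UNIV_Times_UNIV[symmetric] del: UNIV_Times_UNIV)
  have jj: "(of_nat j :: complex) \<noteq> 0" using j by simp
  have comb: "of_nat ((CARD('m\<times>'n) - 1) choose (j - 1)) * s * of_nat CARD('m) = (of_nat (CARD('m\<times>'n) choose j) :: complex)"
  proof -
    have "of_nat j * (of_nat ((CARD('m\<times>'n) - 1) choose (j - 1)) * s * of_nat CARD('m)) =
        of_nat (CARD('m\<times>'n) * ((CARD('m\<times>'n) - 1) choose (j - 1))) * (of_nat j * s) / of_nat CARD('n)"
      unfolding cn by (simp add: field_simps)
    also have "of_nat j * s = of_nat CARD('n)" unfolding s_def using jj by (simp add: field_simps)
    also have "of_nat (CARD('m\<times>'n) * ((CARD('m\<times>'n) - 1) choose (j - 1))) * (of_nat CARD('n) :: complex) / of_nat CARD('n)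
        = of_nat (j * (CARD('m\<times>'n) choose j))"
      unfolding nat[symmetric] by simp
    finally show ?thesis using jj by (simp add: field_simps)
  qed
  have "Lj j (\<lambda>W. complex_of_real (Pj j U W)) Z =
     of_nat (CARD('m\<times>'n) choose j) * k0 ^ j + of_nat ((CARD('m\<times>'n) - 1) choose (j - 1)) * k0 ^ (j - 1) * (s * P * s * (of_nat CARD('m) / c))"
    unfolding Lj_def L spm_rank1[OF j] sumvw ..
  also have "\<dots> = k0 ^ (j - 1) * (s * P / c) * (of_nat ((CARD('m\<times>'n) - 1) choose (j - 1)) * s * of_nat CARD('m) - of_nat (CARD('m\<times>'n) choose j))"
  proof -
    have kj: "k0 ^ j = k0 ^ (j - 1) * k0" using j by (metis Suc_diff_1 less_le_trans zero_less_one power_Suc2)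
    have aux: "C * (K * (- (s * P / c))) + C' * K * (s * P * s * (m / c)) = K * (s * P / c) * (C' * s * m - C)"
      for C C' K m :: complex using c by (simp add: field_simps)
    show ?thesis unfolding kj unfolding k0_def by (rule aux)
  qed
  also have "\<dots> = 0" unfolding comb by simp
  finally show ?thesis .
qed

lemma Re_cdot: "Re (\<Sum>i\<in>UNIV. cnj (u $ i) * v $ i) = inner u (v::complex^'k)"
  by (simp add: inner_vec_def inner_complex_def)

lemma cdot_self: "(\<Sum>i\<in>UNIV. cnj (u $ i) * u $ i) = of_real ((norm (u::complex^'k))\<^sup>2)"
proof -
  have "(\<Sum>i\<in>UNIV. cnj (u $ i) * u $ i) = (\<Sum>i\<in>UNIV. of_real ((cmod (u $ i))\<^sup>2))"
    by (rule sum.cong[OF refl]) (metis complex_norm_square mult.commute)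
  also have "\<dots> = of_real (\<Sum>i\<in>UNIV. (cmod (u $ i))\<^sup>2)" by simp
  also have "(\<Sum>i\<in>UNIV. (cmod (u $ i))\<^sup>2) = (norm u)\<^sup>2"
    by (simp add: norm_vec_def L2_set_def sum_nonneg)
  finally show ?thesis .
qed

lemma qform_MI:
  fixes W :: "complex^'n^'m" and x :: "complex^'m"
  shows "(\<Sum>i\<in>UNIV. \<Sum>k\<in>UNIV. cnj (x $ i) * (mat 1 - W ** ctrans W) $ i $ k * x $ k) =
     (\<Sum>i\<in>UNIV. cnj (x $ i) * x $ i) - (\<Sum>a\<in>UNIV. cnj ((ctrans W *v x) $ a) * (ctrans W *v x) $ a)"
proof -
  have "(\<Sum>i\<in>UNIV. \<Sum>k\<in>UNIV. cnj (x $ i) * (mat 1 - W ** ctrans W) $ i $ k * x $ k) =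
     (\<Sum>i\<in>UNIV. \<Sum>k\<in>UNIV. cnj (x $ i) * (if i = k then 1 else 0) * x $ k) -
     (\<Sum>i\<in>UNIV. \<Sum>k\<in>UNIV. \<Sum>a\<in>UNIV. cnj (x $ i) * (W $ i $ a * cnj (W $ k $ a)) * x $ k)"
    by (simp add: mat_def matrix_matrix_mult_def ctrans_def algebra_simps sum_subtractf sum_distrib_left sum_distrib_right)
  also have "(\<Sum>i\<in>UNIV. \<Sum>k\<in>UNIV. cnj (x $ i) * (if i = k then 1 else 0) * x $ k) = (\<Sum>i\<in>UNIV. cnj (x $ i) * x $ i)"
  proof -
    have e: "cnj (x $ i) * (if i = k then 1 else 0) * x $ k = (if k = i then cnj (x $ i) * x $ k else 0)" for i k
      by simp
    show ?thesis unfolding e by simp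
  qed
  also have "(\<Sum>i\<in>UNIV. \<Sum>k\<in>UNIV. \<Sum>a\<in>UNIV. cnj (x $ i) * (W $ i $ a * cnj (W $ k $ a)) * x $ k) =
      (\<Sum>a\<in>UNIV. cnj ((ctrans W *v x) $ a) * (ctrans W *v x) $ a)"
  proof -
    have "(\<Sum>i\<in>UNIV. \<Sum>k\<in>UNIV. \<Sum>a\<in>UNIV. cnj (x $ i) * (W $ i $ a * cnj (W $ k $ a)) * x $ k) =
       (\<Sum>i\<in>UNIV. \<Sum>a\<in>UNIV. \<Sum>k\<in>UNIV. cnj (x $ i) * (W $ i $ a * cnj (W $ k $ a)) * x $ k)"
      by (rule sum.cong[OF refl], rule sum.swap)
    also have "\<dots> = (\<Sum>a\<in>UNIV. \<Sum>i\<in>UNIV. \<Sum>k\<in>UNIV. cnj (x $ i) * (W $ i $ a * cnj (W $ k $ a)) * x $ k)"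
      by (rule sum.swap)
    also have "\<dots> = (\<Sum>a\<in>UNIV. cnj ((ctrans W *v x) $ a) * (ctrans W *v x) $ a)"
      unfolding matrix_vector_mult_def ctrans_def
      by (simp add: sum_distrib_left sum_distrib_right mult_ac)
    finally show ?thesis .
  qed
  finally show ?thesis .
qed

lemma qform_MI_real:
  fixes W :: "complex^'n^'m" and x :: "complex^'m"
  shows "Re (\<Sum>i\<in>UNIV. \<Sum>k\<in>UNIV. cnj (x $ i) * (mat 1 - W ** ctrans W) $ i $ k * x $ k) =
     (norm x)\<^sup>2 - (norm (ctrans W *v x))\<^sup>2"
  unfolding qform_MI cdot_self by simp

lemma ker_of_det0:
  fixes M :: "complex^'k^'k"
  assumes "det M = 0"
  shows "\<exists>x. x \<noteq> 0 \<and> M *v x = 0"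
proof -
  have "\<not> inj ((*v) M)"
    using det_nz_iff_inj_gen[OF matrix_vector_mul_linear_gen[of M]] assms
    by (simp add: matrix_of_matrix_vector_mul)
  then obtain x y where "x \<noteq> y" "M *v x = M *v y" unfolding inj_def by blast
  then show ?thesis
    by (intro exI[of _ "x - y"]) (simp add: matrix_vector_mult_diff_distrib)
qed

lemma qform_mv: "(\<Sum>i\<in>UNIV. \<Sum>k\<in>UNIV. cnj (x $ i) * M $ i $ k * x $ k) = (\<Sum>i\<in>UNIV. cnj (x $ i) * (M *v x) $ i)"
  by (simp add: matrix_vector_mult_def sum_distrib_left mult_ac)

lemma domI_contract:
  fixes Z :: "complex^'n^'m"
  assumes Z: "Z \<in> domI" and x: "x \<noteq> 0"
  shows "(norm (ctrans Z *v x))\<^sup>2 < (norm x)\<^sup>2"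
proof -
  have "0 < Re (\<Sum>i\<in>UNIV. \<Sum>k\<in>UNIV. cnj (x $ i) * (mat 1 - Z ** ctrans Z) $ i $ k * x $ k)"
    using Z x unfolding domI_def pos_def_herm_def by blast
  then show ?thesis unfolding qform_MI_real by simp
qed

lemma ctrans_scaleR: "ctrans (t *\<^sub>R Z) = t *\<^sub>R ctrans Z"
  by (simp add: ctrans_def vec_eq_iff)

lemma scaleR_mv: "(t *\<^sub>R A) *v x = t *\<^sub>R (A *v (x::complex^'k))"
  by (simp add: vec_eq_iff matrix_vector_mult_def scaleR_sum_right)

lemma det_MI_scaled_nz:
  fixes Z :: "complex^'n^'m"
  assumes Z: "Z \<in> domI" and t: "\<bar>t\<bar> \<le> 1"
  shows "det (MI (t *\<^sub>R Z)) \<noteq> 0"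
proof
  assume "det (MI (t *\<^sub>R Z)) = 0"
  then obtain x where x: "x \<noteq> 0" "MI (t *\<^sub>R Z) *v x = 0" using ker_of_det0 by blast
  have "Re (\<Sum>i\<in>UNIV. \<Sum>k\<in>UNIV. cnj (x $ i) * (mat 1 - (t *\<^sub>R Z) ** ctrans (t *\<^sub>R Z)) $ i $ k * x $ k) = 0"
    unfolding qform_mv using x(2) by (simp add: MI_def)
  then have e: "(norm x)\<^sup>2 = (norm (ctrans (t *\<^sub>R Z) *v x))\<^sup>2" unfolding qform_MI_real by simp
  have "ctrans (t *\<^sub>R Z) *v x = t *\<^sub>R (ctrans Z *v x)"
    unfolding ctrans_scaleR by (rule scaleR_mv)
  then have "(norm (ctrans (t *\<^sub>R Z) *v x))\<^sup>2 = t\<^sup>2 * (norm (ctrans Z *v x))\<^sup>2"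
    by (simp add: power_mult_distrib)
  also have "\<dots> \<le> (norm (ctrans Z *v x))\<^sup>2"
    using t by (simp add: abs_square_le_1 mult_left_le_one_le)
  also have "\<dots> < (norm x)\<^sup>2" by (rule domI_contract[OF Z x(1)])
  finally show False using e by simp
qed

lemma domI_pos:
  fixes Z :: "complex^'n^'m"
  assumes Z: "Z \<in> domI"
  shows "0 < Re (det (MI Z))"
proof (rule ccontr)
  assume "\<not> 0 < Re (det (MI Z))"
  then have n: "- Re (det (MI (1 *\<^sub>R Z))) \<ge> 0" by simp
  have c: "continuous_on {0..1} (\<lambda>t::real. - Re (det (MI (t *\<^sub>R Z))))"
    by (intro continuous_intros continuous_on_compose2[OF cont_det_MI]) auto
  have z: "- Re (det (MI (0 *\<^sub>R Z))) \<le> 0" by (simp add: MI_def)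
  obtain t where t: "0 \<le> t" "t \<le> 1" "- Re (det (MI (t *\<^sub>R Z))) = 0"
    using IVT'[of "\<lambda>t::real. - Re (det (MI (t *\<^sub>R Z)))" 0 0 1, OF z n _ c] by auto
  then have "det (MI (t *\<^sub>R Z)) = 0" by (subst det_MI_ofreal) simp
  moreover have "det (MI (t *\<^sub>R Z)) \<noteq> 0" by (rule det_MI_scaled_nz[OF Z]) (use t in auto)
  ultimately show False by simp
qed

lemma cdot_mv: "(\<Sum>i\<in>UNIV. cnj (x $ i) * (Z *v y) $ i) = (\<Sum>a\<in>UNIV. cnj ((ctrans Z *v x) $ a) * y $ a)"
proof -
  have "(\<Sum>i\<in>UNIV. cnj (x $ i) * (Z *v y) $ i) = (\<Sum>i\<in>UNIV. \<Sum>a\<in>UNIV. cnj (x $ i) * Z $ i $ a * y $ a)"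
    by (simp add: matrix_vector_mult_def sum_distrib_left mult_ac)
  also have "\<dots> = (\<Sum>a\<in>UNIV. \<Sum>i\<in>UNIV. cnj (x $ i) * Z $ i $ a * y $ a)"
    by (rule sum.swap)
  also have "\<dots> = (\<Sum>a\<in>UNIV. cnj ((ctrans Z *v x) $ a) * y $ a)"
    by (simp add: matrix_vector_mult_def ctrans_def sum_distrib_right sum_distrib_left mult_ac)
  finally show ?thesis .
qed

lemma domI_FI:
  fixes U Z :: "complex^'n^'m"
  assumes Z: "Z \<in> domI" and UU: "U ** ctrans U = mat 1"
  shows "det (FI U Z) \<noteq> 0"
proof
  assume "det (FI U Z) = 0"
  then obtain x where x: "x \<noteq> 0" "FI U Z *v x = 0" using ker_of_det0 by blast
  define y where "y = ctrans U *v x"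
  define w where "w = ctrans Z *v x"
  have xy: "x = Z *v y"
    using x(2) unfolding FI_def y_def
    by (simp add: matrix_vector_mult_diff_rdistrib matrix_vector_mul_assoc)
  have ny: "(norm x)\<^sup>2 - (norm y)\<^sup>2 = 0"
    using qform_MI_real[where W=U and x=x] unfolding UU y_def by simp
  have "(norm x)\<^sup>2 = Re (\<Sum>i\<in>UNIV. cnj (x $ i) * x $ i)" by (simp add: cdot_self)
  also have "\<dots> = Re (\<Sum>i\<in>UNIV. cnj (x $ i) * (Z *v y) $ i)" using xy by simp
  also have "\<dots> = inner w y" unfolding cdot_mv Re_cdot w_def ..
  also have "\<dots> \<le> norm w * norm y" by (rule norm_cauchy_schwarz)
  finally have le0: "(norm x)\<^sup>2 \<le> norm w * norm y" .
  have "(norm y)\<^sup>2 = (norm x)\<^sup>2" using ny by simp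
  then have "norm y = norm x" by (rule power2_eq_imp_eq[OF _ norm_ge_zero norm_ge_zero])
  then have le: "(norm x)\<^sup>2 \<le> norm w * norm x" using le0 by simp
  have "(norm w)\<^sup>2 < (norm x)\<^sup>2" unfolding w_def by (rule domI_contract[OF Z x(1)])
  then have "norm w < norm x" by (rule power_less_imp_less_base[OF _ norm_ge_zero])
  moreover have "0 < norm x" using x(1) by simp
  ultimately have "norm w * norm x < (norm x)\<^sup>2" by (simp add: power2_eq_square)
  then show False using le by simp
qed

lemma domI_Om:
  fixes U Z :: "complex^'n^'m"
  assumes Z: "Z \<in> domI" and UU: "U ** ctrans U = mat 1"
  shows "Z \<in> Om U"
  using domI_pos[OF Z] domI_FI[OF Z UU] by (simp add: Om_def)

theorem mainTheorem7:
  fixes U :: "complex^'n^'m" and Z :: "complex^'n^'m" and j :: nat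
  assumes "CARD('m) \<le> CARD('n)"
    and "U ** ctrans U = mat 1"
    and "j \<in> {1..CARD('m) * CARD('n)}"
    and "Z \<in> domI"
  shows "Lj j (\<lambda>W. complex_of_real (Pj j U W)) Z = 0"
proof -
  have Om: "Z \<in> Om U" by (rule domI_Om[OF assms(4) assms(2)])
  have j: "1 \<le> j" using assms(3) by simp
  show ?thesis by (rule main_Om[OF Om assms(2) j])
qed

end
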